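(* Let $A\subset\mathcal X$ be nonempty and $x\in\mathcal X\setminus A$. For every $\varepsilon>0$ there exists $\kappa>0$ such that for all $\beta$ sufficiently large $$\mathbb P\big(\tau^x_A<e^{\beta(\Psi_{\min}(x,A)-\varepsilon)}\big)<e^{-\kappa\beta}\quad\text{and}\quad \mathbb P\big(\tau^x_A>e^{\beta(\Psi_{\max}(x,A)+\varepsilon)}\big)<e^{-\kappa\beta}.$$
   Context: Setting: $\mathcal X$ is a finite set, $H:\mathcal X\to\mathbb R$ a non-constant function, $q:\mathcal X\times\mathcal X\to[0,1]$ a stochastic, symmetric, irreducible matrix. A path is a finite sequence $\omega=(\omega_1,\dots,\omega_n)$ with $q(\omega_i,\omega_{i+1})>0$ for all $i$ (length $|\omega|=n$, $n=1$ allowed); $\omega:x\to y$ means $\omega_1=x,\omega_n=y$; irreducibility means such a path exists for all $x,y$. For $\beta>0$ the Metropolis chain $(X_t)$ has $P_\beta(x,y)=q(x,y)e^{-\beta[H(y)-H(x)]^+}$ ($x\neq y$), $P_\beta(x,x)=1-\sum_{z\neq x}P_\beta(x,z)$; $\tau^x_A=\inf\{t>0:X_t\in A\}$ for the chain started at $x$. Height $\Phi_\omega=\max_iH(\omega_i)$; $\Phi(x,y)=\min_{\omega:x\to y}\Phi_\omega$; $\Phi(B,D)=\min_{x\in B,y\in D}\Phi(x,y)$, $\Phi(x,A)=\Phi(\{x\},A)$. $\Omega_{x,A}$ = set of paths $\omega:x\to y$ with $y\in A$ and $\omega_i\notin A$ for $i<|\omega|$. A set with at least two elements is connected if any two of its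 elements are joined by a path lying in it. $\partial B=\{y\notin B:\exists x\in B,\ q(x,y)>0\}$; $\mathcal F(B)$ = set of minimizers of $H$ on $B$, and $H(\mathcal F(B))$ the minimum value. A cycle is a nonempty $C\subset\mathcal X$ that is either a singleton or a connected set with $\max_{z\in C}H(z)<H(\mathcal F(\partial C))$; its depth is $\Gamma(C)=\Phi(C,\mathcal X\setminus C)-H(\mathcal F(C))$. Initial cycle: $C_A(x)=\{x\}\cup\{z:\Phi(x,z)<\Phi(x,A)\}$, and $\Gamma(z,A)=\Gamma(C_A(z))$ (this is $0$ for $z\in A$). Convention: $A$ is assumed to contain every state $y$ such that every path from $x$ to $y$ meets $A$. Optimal paths: $\Omega^{\rm opt}_{x,A}=\{\omega\in\Omega_{x,A}:\Phi_\omega=\Phi(x,A)\}$. Define $\Psi_{\min}(x,A)=\min_{\omega\in\Omega^{\rm opt}_{x,A}}\max_{z\in\omega}\Gamma(z,A)$ and $\Psi_{\max}(x,A)=\max_{\omega\in\Omega^{\rm opt}_{x,A}}\max_{z\in\omega}\Gamma(z,A)$. *)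

theory Defs
  imports Complex_Main
begin

definition is_path :: "('a \<Rightarrow> 'a \<Rightarrow> real) \<Rightarrow> 'a list \<Rightarrow> bool" where
  "is_path q \<omega> \<longleftrightarrow> \<omega> \<noteq> [] \<and> (\<forall>i. Suc i < length \<omega> \<longrightarrow> q (\<omega> ! i) (\<omega> ! Suc i) > 0)"

definition path_from_to :: "('a \<Rightarrow> 'a \<Rightarrow> real) \<Rightarrow> 'a list \<Rightarrow> 'a \<Rightarrow> 'a \<Rightarrow> bool" where
  "path_from_to q \<omega> x y \<longleftrightarrow> is_path q \<omega> \<and> hd \<omega> = x \<and> last \<omega> = y"

definition path_height :: "('a \<Rightarrow> real) \<Rightarrow> 'a list \<Rightarrow> real" where
  "path_height H \<omega> = Max (H ` set \<omega>)"

definition comm_height :: "('a \<Rightarrow> real) \<Rightarrow> ('a \<Rightarrow> 'a \<Rightarrow> real) \<Rightarrow> 'a \<Rightarrow> 'a \<Rightarrow> real" where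
  "comm_height H q x y = Min {path_height H \<omega> | \<omega>. path_from_to q \<omega> x y}"

definition comm_height_set :: "('a \<Rightarrow> real) \<Rightarrow> ('a \<Rightarrow> 'a \<Rightarrow> real) \<Rightarrow> 'a set \<Rightarrow> 'a set \<Rightarrow> real" where
  "comm_height_set H q B D = Min {comm_height H q x y | x y. x \<in> B \<and> y \<in> D}"

definition initial_cycle :: "('a \<Rightarrow> real) \<Rightarrow> ('a \<Rightarrow> 'a \<Rightarrow> real) \<Rightarrow> 'a set \<Rightarrow> 'a \<Rightarrow> 'a set" where
  "initial_cycle H q A x = {x} \<union> {z. comm_height H q x z < comm_height_set H q {x} A}"

definition depth :: "('a \<Rightarrow> real) \<Rightarrow> ('a \<Rightarrow> 'a \<Rightarrow> real) \<Rightarrow> 'a set \<Rightarrow> real" where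
  "depth H q C = comm_height_set H q C (- C) - Min (H ` C)"

text \<open>\<open>\<Gamma>(z,A) = \<Gamma>(C_A(z))\<close>, with the paper's convention that it is 0 for \<open>z \<in> A\<close>.\<close>
definition Gamma :: "('a \<Rightarrow> real) \<Rightarrow> ('a \<Rightarrow> 'a \<Rightarrow> real) \<Rightarrow> 'a \<Rightarrow> 'a set \<Rightarrow> real" where
  "Gamma H q z A = (if z \<in> A then 0 else depth H q (initial_cycle H q A z))"

definition first_hit_paths :: "('a \<Rightarrow> 'a \<Rightarrow> real) \<Rightarrow> 'a \<Rightarrow> 'a set \<Rightarrow> 'a list set" where
  "first_hit_paths q x A =
     {\<omega>. is_path q \<omega> \<and> hd \<omega> = x \<and> last \<omega> \<in> A \<and> (\<forall>i. Suc i < length \<omega> \<longrightarrow> \<omega> ! i \<notin> A)}"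

definition opt_paths :: "('a \<Rightarrow> real) \<Rightarrow> ('a \<Rightarrow> 'a \<Rightarrow> real) \<Rightarrow> 'a \<Rightarrow> 'a set \<Rightarrow> 'a list set" where
  "opt_paths H q x A =
     {\<omega> \<in> first_hit_paths q x A. path_height H \<omega> = comm_height_set H q {x} A}"

definition Psi_min :: "('a \<Rightarrow> real) \<Rightarrow> ('a \<Rightarrow> 'a \<Rightarrow> real) \<Rightarrow> 'a \<Rightarrow> 'a set \<Rightarrow> real" where
  "Psi_min H q x A = Min ((\<lambda>\<omega>. Max ((\<lambda>z. Gamma H q z A) ` set \<omega>)) ` opt_paths H q x A)"

definition Psi_max :: "('a \<Rightarrow> real) \<Rightarrow> ('a \<Rightarrow> 'a \<Rightarrow> real) \<Rightarrow> 'a \<Rightarrow> 'a set \<Rightarrow> real" where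
  "Psi_max H q x A = Max ((\<lambda>\<omega>. Max ((\<lambda>z. Gamma H q z A) ` set \<omega>)) ` opt_paths H q x A)"

definition metro :: "('a::finite \<Rightarrow> real) \<Rightarrow> ('a \<Rightarrow> 'a \<Rightarrow> real) \<Rightarrow> real \<Rightarrow> 'a \<Rightarrow> 'a \<Rightarrow> real" where
  "metro H q \<beta> x y =
     (if x = y then 1 - (\<Sum>z\<in>UNIV - {x}. q x z * exp (- \<beta> * max 0 (H z - H x)))
      else q x y * exp (- \<beta> * max 0 (H y - H x)))"

text \<open>\<open>hit_le H q \<beta> A n x\<close> is \<open>P(\<tau>^x_A \<le> n)\<close> for the Metropolis chain started at \<open>x\<close>,
  where \<open>\<tau>^x_A = inf {t > 0. X_t \<in> A}\<close> (first-step decomposition).\<close>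
fun hit_le :: "('a::finite \<Rightarrow> real) \<Rightarrow> ('a \<Rightarrow> 'a \<Rightarrow> real) \<Rightarrow> real \<Rightarrow> 'a set \<Rightarrow> nat \<Rightarrow> 'a \<Rightarrow> real" where
  "hit_le H q \<beta> A 0 x = 0"
| "hit_le H q \<beta> A (Suc n) x =
     (\<Sum>y\<in>UNIV. metro H q \<beta> x y * (if y \<in> A then 1 else hit_le H q \<beta> A n y))"

text \<open>\<open>P(\<tau>^x_A < T)\<close> for real \<open>T > 0\<close>: since \<open>\<tau>\<close> is a positive integer, \<open>\<tau> < T \<longleftrightarrow> \<tau> \<le> \<lceil>T\<rceil> - 1\<close>.\<close>
definition prob_hit_before :: "('a::finite \<Rightarrow> real) \<Rightarrow> ('a \<Rightarrow> 'a \<Rightarrow> real) \<Rightarrow> real \<Rightarrow> 'a set \<Rightarrow> 'a \<Rightarrow> real \<Rightarrow> real" where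
  "prob_hit_before H q \<beta> A x T = hit_le H q \<beta> A (nat (\<lceil>T\<rceil> - 1)) x"

text \<open>\<open>P(\<tau>^x_A > T)\<close> for real \<open>T \<ge> 0\<close>: \<open>\<tau> > T \<longleftrightarrow> \<not> \<tau> \<le> \<lfloor>T\<rfloor>\<close> (includes \<open>\<tau> = \<infinity>\<close>).\<close>
definition prob_hit_after :: "('a::finite \<Rightarrow> real) \<Rightarrow> ('a \<Rightarrow> 'a \<Rightarrow> real) \<Rightarrow> real \<Rightarrow> 'a set \<Rightarrow> 'a \<Rightarrow> real \<Rightarrow> real" where
  "prob_hit_after H q \<beta> A x T = 1 - hit_le H q \<beta> A (nat \<lfloor>T\<rfloor>) x"

end

theory Submission
  imports Defs
begin


fun hit :: "('a::finite \<Rightarrow> 'a \<Rightarrow> real) \<Rightarrow> 'a set \<Rightarrow> 'a set \<Rightarrow> nat \<Rightarrow> 'a \<Rightarrow> real" where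
  "hit P E F 0 y = 0"
| "hit P E F (Suc n) y =
     (\<Sum>w\<in>UNIV. P y w * (if w \<in> E then 1 else if w \<in> F then 0 else hit P E F n w))"

definition hitinf :: "('a::finite \<Rightarrow> 'a \<Rightarrow> real) \<Rightarrow> 'a set \<Rightarrow> 'a set \<Rightarrow> 'a \<Rightarrow> real" where
  "hitinf P E F y = (SUP n. hit P E F n y)"

locale chain =
  fixes P :: "'a::finite \<Rightarrow> 'a \<Rightarrow> real"
  assumes P_nonneg: "\<And>u v. P u v \<ge> 0"
    and P_stoch: "\<And>u. (\<Sum>v\<in>UNIV. P u v) = 1"
begin

lemma hit_bounds: "0 \<le> hit P E F n y \<and> hit P E F n y \<le> 1"
proof (induction n arbitrary: y)
  case 0
  then show ?case by simp
next
  case (Suc n)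
  let ?g = "\<lambda>w. (if w \<in> E then 1 else if w \<in> F then 0 else hit P E F n w)"
  have g: "0 \<le> ?g w \<and> ?g w \<le> 1" for w using Suc by auto
  have "0 \<le> (\<Sum>w\<in>UNIV. P y w * ?g w)"
    by (intro sum_nonneg) (use g P_nonneg in auto)
  moreover have "(\<Sum>w\<in>UNIV. P y w * ?g w) \<le> (\<Sum>w\<in>UNIV. P y w)"
  proof (intro sum_mono)
    fix w show "P y w * ?g w \<le> P y w" using g[of w] P_nonneg[of y w] mult_left_le by blast
  qed
  ultimately show ?case using P_stoch[of y] by simp
qed

lemma hit_nonneg: "0 \<le> hit P E F n y" using hit_bounds by blast
lemma hit_le_1: "hit P E F n y \<le> 1" using hit_bounds by blast

lemma hit_Suc_mono: "hit P E F n y \<le> hit P E F (Suc n) y"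
proof (induction n arbitrary: y)
  case 0
  then show ?case using hit_nonneg[of E F "Suc 0" y] by simp
next
  case (Suc n)
  show ?case
    unfolding hit.simps(2)[of P E F "Suc n"] hit.simps(2)[of P E F n]
    by (intro sum_mono mult_left_mono) (use Suc P_nonneg in auto)
qed

lemma hit_incseq: "incseq (\<lambda>n. hit P E F n y)"
  by (intro incseq_SucI hit_Suc_mono)

lemma hit_mono_n: "m \<le> n \<Longrightarrow> hit P E F m y \<le> hit P E F n y"
  using hit_incseq[of E F y] by (auto simp: incseq_def)

lemma hit_tendsto: "(\<lambda>n. hit P E F n y) \<longlonglongrightarrow> hitinf P E F y"
  unfolding hitinf_def
  by (rule LIMSEQ_incseq_SUP) (use hit_incseq hit_le_1 in \<open>auto intro!: bdd_aboveI[where M=1]\<close>)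

lemma hit_le_hitinf: "hit P E F n y \<le> hitinf P E F y"
  unfolding hitinf_def by (rule cSUP_upper) (use hit_le_1 in \<open>auto intro!: bdd_aboveI[where M=1]\<close>)

lemma hitinf_bounds: "0 \<le> hitinf P E F y \<and> hitinf P E F y \<le> 1"
proof
  show "0 \<le> hitinf P E F y" using hit_le_hitinf[of E F 0 y] by simp
  show "hitinf P E F y \<le> 1" unfolding hitinf_def
    by (rule cSUP_least) (use hit_le_1 in auto)
qed

lemma hitinf_nonneg: "0 \<le> hitinf P E F y" using hitinf_bounds by blast
lemma hitinf_le_1: "hitinf P E F y \<le> 1" using hitinf_bounds by blast

lemma hitinf_rec: "hitinf P E F y =
   (\<Sum>w\<in>UNIV. P y w * (if w \<in> E then 1 else if w \<in> F then 0 else hitinf P E F w))"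
proof -
  have "(\<lambda>n. hit P E F (Suc n) y) \<longlonglongrightarrow> hitinf P E F y"
    using hit_tendsto by (rule LIMSEQ_Suc)
  moreover have "(\<lambda>n. hit P E F (Suc n) y) \<longlonglongrightarrow>
     (\<Sum>w\<in>UNIV. P y w * (if w \<in> E then 1 else if w \<in> F then 0 else hitinf P E F w))"
    unfolding hit.simps
    by (intro tendsto_sum tendsto_mult tendsto_const) (auto intro: hit_tendsto)
  ultimately show ?thesis using LIMSEQ_unique by blast
qed

lemma hit_split:
  assumes "E \<inter> F = {}"
  shows "hit P E (F \<union> G) n y + hit P F (E \<union> G) n y = hit P (E \<union> F) G n y"
proof (induction n arbitrary: y)
  case 0
  then show ?case by simp
next
  case (Suc n)
  have "hit P E (F \<union> G) (Suc n) y + hit P F (E \<union> G) (Suc n) y =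
    (\<Sum>w\<in>UNIV. P y w * (if w \<in> E then 1 else if w \<in> F \<union> G then 0 else hit P E (F \<union> G) n w)
       + P y w * (if w \<in> F then 1 else if w \<in> E \<union> G then 0 else hit P F (E \<union> G) n w))"
    by (simp add: sum.distrib)
  also have "\<dots> = (\<Sum>w\<in>UNIV. P y w * (if w \<in> E \<union> F then 1 else if w \<in> G then 0 else hit P (E \<union> F) G n w))"
    by (intro sum.cong refl) (use assms Suc in \<open>auto simp: algebra_simps simp flip: distrib_left\<close>)
  finally show ?case by simp
qed

lemma hitinf_split:
  assumes "E \<inter> F = {}"
  shows "hitinf P E (F \<union> G) y + hitinf P F (E \<union> G) y = hitinf P (E \<union> F) G y"
proof -
  have "(\<lambda>n. hit P E (F \<union> G) n y + hit P F (E \<union> G) n y) \<longlonglongrightarrow> hitinf P E (F \<union> G) y + hitinf P F (E \<union> G) y"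
    by (intro tendsto_add hit_tendsto)
  then have "(\<lambda>n. hit P (E \<union> F) G n y) \<longlonglongrightarrow> hitinf P E (F \<union> G) y + hitinf P F (E \<union> G) y"
    using hit_split[OF assms] by simp
  then show ?thesis using hit_tendsto LIMSEQ_unique by blast
qed

lemma hit_mono_sets:
  assumes "E1 \<subseteq> E2" "F2 \<subseteq> F1"
  shows "hit P E1 F1 n y \<le> hit P E2 F2 n y"
proof (induction n arbitrary: y)
  case 0
  then show ?case by simp
next
  case (Suc n)
  show ?case unfolding hit.simps
    by (intro sum_mono mult_left_mono) (use Suc assms P_nonneg hit_bounds in auto)
qed

lemma hitinf_mono_sets:
  assumes "E1 \<subseteq> E2" "F2 \<subseteq> F1"
  shows "hitinf P E1 F1 y \<le> hitinf P E2 F2 y"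
  by (rule LIMSEQ_le[OF hit_tendsto hit_tendsto]) (use hit_mono_sets[OF assms] in auto)

lemma hit_fhd:
  "hit P E F n y \<le> hit P E (F \<union> G) n y +
     (\<Sum>g\<in>G. hit P {g} (E \<union> F \<union> (G - {g})) n y * hit P E F n g)"
proof (induction n arbitrary: y)
  case 0
  then show ?case by simp
next
  case (Suc n)
  define c where "c g = hit P E F (Suc n) g" for g
  have c_ge: "hit P E F n g \<le> c g" for g unfolding c_def by (rule hit_Suc_mono)
  have c_nn: "0 \<le> c g" for g unfolding c_def by (rule hit_nonneg)
  let ?T = "\<lambda>g w. (if w = g then 1 else if w \<in> E \<union> F \<union> (G - {g}) then 0
                   else hit P {g} (E \<union> F \<union> (G - {g})) n w)"
  have "hit P E F (Suc n) y \<le> (\<Sum>w\<in>UNIV. P y w * ((if w \<in> E then 1 else if w \<in> F \<union> G then 0 else hit P E (F \<union> G) n w)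
        + (\<Sum>g\<in>G. ?T g w * c g)))"
    unfolding hit.simps
  proof (intro sum_mono mult_left_mono P_nonneg)
    fix w
    show "(if w \<in> E then 1 else if w \<in> F then 0 else hit P E F n w)
      \<le> (if w \<in> E then 1 else if w \<in> F \<union> G then 0 else hit P E (F \<union> G) n w) + (\<Sum>g\<in>G. ?T g w * c g)"
    proof (cases "w \<in> E")
      case True
      have "0 \<le> (\<Sum>g\<in>G. ?T g w * c g)"
        by (intro sum_nonneg mult_nonneg_nonneg c_nn) (auto simp: hit_nonneg)
      then show ?thesis using True by simp
    next
      case nE: False
      show ?thesis
      proof (cases "w \<in> F")
        case True
        have "0 \<le> (\<Sum>g\<in>G. ?T g w * c g)"
          by (intro sum_nonneg mult_nonneg_nonneg c_nn) (auto simp: hit_nonneg)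
        then show ?thesis using True nE by simp
      next
        case nF: False
        show ?thesis
        proof (cases "w \<in> G")
          case True
          have "(\<Sum>g\<in>G. ?T g w * c g) = (\<Sum>g\<in>G. if g = w then c g else 0)"
            by (intro sum.cong refl) (use True nE nF in auto)
          also have "\<dots> = c w" using True by (simp add: sum.delta)
          finally show ?thesis using True nE nF c_ge[of w] by simp
        next
          case nG: False
          have "(\<Sum>g\<in>G. ?T g w * c g) = (\<Sum>g\<in>G. hit P {g} (E \<union> F \<union> (G - {g})) n w * c g)"
            by (intro sum.cong refl) (use nG nE nF in auto)
          moreover have "(\<Sum>g\<in>G. hit P {g} (E \<union> F \<union> (G - {g})) n w * hit P E F n g)
              \<le> (\<Sum>g\<in>G. hit P {g} (E \<union> F \<union> (G - {g})) n w * c g)"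
            by (intro sum_mono mult_left_mono c_ge hit_nonneg)
          ultimately show ?thesis using Suc[of w] nE nF nG by simp
        qed
      qed
    qed
  qed
  also have "\<dots> = hit P E (F \<union> G) (Suc n) y + (\<Sum>g\<in>G. hit P {g} (E \<union> F \<union> (G - {g})) (Suc n) y * c g)"
    unfolding hit.simps
    by (simp add: sum.distrib sum_distrib_left sum_distrib_right algebra_simps sum.swap[of _ G UNIV])
  finally show ?case unfolding c_def .
qed

end



lemma sum_split_compl:
  fixes f :: "'a::finite \<Rightarrow> real"
  shows "(\<Sum>w\<in>UNIV. f w) = (\<Sum>w\<in>K. f w) + (\<Sum>w\<in>-K. f w)"
proof -
  have "UNIV = K \<union> -K" by auto
  then have "(\<Sum>w\<in>UNIV. f w) = (\<Sum>w\<in>K \<union> -K. f w)" by simp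
  also have "\<dots> = (\<Sum>w\<in>K. f w) + (\<Sum>w\<in>-K. f w)"
    by (rule sum.union_disjoint) auto
  finally show ?thesis .
qed

context chain
begin

lemma hitinf_renewal:
  assumes "u \<notin> E" "u \<notin> F" "E \<inter> F = {}"
  shows "hitinf P E F u * hitinf P F {u} u \<le> hitinf P E (F \<union> {u}) u"
proof -
  define p where "p = hitinf P E F u"
  define a where "a = hitinf P E (F \<union> {u}) u"
  define r where "r = hitinf P {u} (E \<union> F) u"
  define e where "e = hitinf P F {u} u"
  have fhd: "hit P E F n u \<le> hit P E (F \<union> {u}) n u + hit P {u} (E \<union> F) n u * hit P E F n u" for n
    using hit_fhd[of E F n u "{u}"] by simp
  have "(\<lambda>n. hit P E (F \<union> {u}) n u + hit P {u} (E \<union> F) n u * hit P E F n u) \<longlonglongrightarrow> a + r * p"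
    unfolding a_def r_def p_def by (intro tendsto_add tendsto_mult hit_tendsto)
  then have 1: "p \<le> a + r * p"
    unfolding p_def by (rule LIMSEQ_le[OF hit_tendsto]) (use fhd in auto)
  have s1: "hitinf P E (F \<union> {u}) u + hitinf P F (E \<union> {u}) u = hitinf P (E \<union> F) {u} u"
    using hitinf_split[OF assms(3), of "{u}" u] by simp
  have "(E \<union> F) \<inter> {u} = {}" using assms by auto
  from hitinf_split[OF this, of "{}" u]
  have s2: "hitinf P (E \<union> F) {u} u + hitinf P {u} (E \<union> F) u = hitinf P (E \<union> F \<union> {u}) {} u" by simp
  have "e \<le> hitinf P (E \<union> F) {u} u" unfolding e_def by (rule hitinf_mono_sets) auto
  then have "e \<le> 1 - r" using s2 hitinf_le_1[of "E \<union> F \<union> {u}" "{}" u] unfolding r_def by linarith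
  moreover have "0 \<le> p" unfolding p_def by (rule hitinf_nonneg)
  ultimately have "p * e \<le> p * (1 - r)" by (intro mult_left_mono)
  also have "\<dots> \<le> a" using 1 by (simp add: algebra_simps)
  finally show ?thesis unfolding p_def e_def a_def .
qed

end

locale revchain = chain +
  fixes mu :: "'a::finite \<Rightarrow> real"
  assumes mu_pos: "\<And>u. mu u > 0"
    and rev: "\<And>u v. mu u * P u v = mu v * P v u"
begin

lemma lemmaK:
  assumes "u \<in> K"
  shows "mu u * hit P (-K) {} n u \<le> real n * (\<Sum>c\<in>K. \<Sum>y\<in>-K. mu c * P c y)"
proof -
  define Fl where "Fl = (\<Sum>c\<in>K. \<Sum>y\<in>-K. mu c * P c y)"
  have "(\<Sum>y\<in>K. mu y * hit P (-K) {} n y) \<le> real n * Fl"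
  proof (induction n)
    case 0
    then show ?case by simp
  next
    case (Suc n)
    have "(\<Sum>y\<in>K. mu y * hit P (-K) {} (Suc n) y)
       = (\<Sum>y\<in>K. (\<Sum>w\<in>K. mu y * P y w * hit P (-K) {} n w) + (\<Sum>w\<in>-K. mu y * P y w))"
      unfolding hit.simps
      by (intro sum.cong refl) (simp add: sum_split_compl[of _ K] sum_distrib_left algebra_simps)
    also have "\<dots> = (\<Sum>y\<in>K. \<Sum>w\<in>K. mu y * P y w * hit P (-K) {} n w) + Fl"
      unfolding Fl_def sum.distrib by simp
    also have swp: "(\<Sum>y\<in>K. \<Sum>w\<in>K. mu y * P y w * hit P (-K) {} n w)
        = (\<Sum>w\<in>K. hit P (-K) {} n w * (\<Sum>y\<in>K. mu w * P w y))"
    proof -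
      have "(\<Sum>y\<in>K. \<Sum>w\<in>K. mu y * P y w * hit P (-K) {} n w)
        = (\<Sum>w\<in>K. \<Sum>y\<in>K. mu y * P y w * hit P (-K) {} n w)"
        by (rule sum.swap)
      also have "\<dots> = (\<Sum>w\<in>K. \<Sum>y\<in>K. hit P (-K) {} n w * (mu w * P w y))"
        by (intro sum.cong refl) (metis rev mult.commute)
      also have "\<dots> = (\<Sum>w\<in>K. hit P (-K) {} n w * (\<Sum>y\<in>K. mu w * P w y))"
        by (simp add: sum_distrib_left)
      finally show ?thesis .
    qed
    also have "(\<Sum>w\<in>K. hit P (-K) {} n w * (\<Sum>y\<in>K. mu w * P w y)) + Fl \<le> (\<Sum>w\<in>K. hit P (-K) {} n w * mu w) + Fl"
    proof -
      have "(\<Sum>y\<in>K. mu w * P w y) \<le> mu w" for w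
      proof -
        have "(\<Sum>y\<in>K. P w y) \<le> (\<Sum>y\<in>UNIV. P w y)"
          by (rule sum_mono2) (auto simp: P_nonneg)
        then have "(\<Sum>y\<in>K. P w y) \<le> 1" using P_stoch by simp
        then show ?thesis using mu_pos[of w]
          by (simp add: sum_distrib_left[symmetric] mult_left_le)
      qed
      then show ?thesis
        by (intro add_mono sum_mono mult_left_mono hit_nonneg) auto
    qed
    also have "\<dots> \<le> real n * Fl + Fl" using Suc by (simp add: mult.commute)
    finally show ?case by (simp add: algebra_simps)
  qed
  moreover have "mu u * hit P (-K) {} n u \<le> (\<Sum>y\<in>K. mu y * hit P (-K) {} n y)"
    by (rule member_le_sum) (use assms in \<open>auto intro!: mult_nonneg_nonneg hit_nonneg less_imp_le[OF mu_pos]\<close>)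
  ultimately show ?thesis unfolding Fl_def by linarith
qed

lemma hit_Suc_split: "hit P E F (Suc n) y = (\<Sum>e\<in>E. P y e) + (\<Sum>w\<in>-(E\<union>F). P y w * hit P E F n w)"
proof -
  have "hit P E F (Suc n) y = (\<Sum>w\<in>UNIV. (if w \<in> E then P y w else 0) + (if w \<in> -(E\<union>F) then P y w * hit P E F n w else 0))"
    unfolding hit.simps by (intro sum.cong refl) auto
  also have "\<dots> = (\<Sum>e\<in>E. P y e) + (\<Sum>w\<in>-(E\<union>F). P y w * hit P E F n w)"
    unfolding sum.distrib sum.If_cases[OF finite] by (simp add: Collect_neg_eq[symmetric] Compl_eq)
  finally show ?thesis .
qed

fun Qit :: "'a set \<Rightarrow> ('a \<Rightarrow> real) \<Rightarrow> nat \<Rightarrow> 'a \<Rightarrow> real" where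
  "Qit L f 0 = f"
| "Qit L f (Suc t) = (\<lambda>y. \<Sum>v\<in>L. P y v * Qit L f t v)"

lemma Qit_comm: "Qit L (\<lambda>y. \<Sum>v\<in>L. P y v * f v) t = Qit L f (Suc t)"
  by (induction t) auto

lemma Qit_adjoint:
  "(\<Sum>c\<in>L. mu c * a c * Qit L b t c) = (\<Sum>c\<in>L. mu c * b c * Qit L a t c)"
proof (induction t arbitrary: a)
  case 0
  then show ?case by (simp add: algebra_simps)
next
  case (Suc t)
  have "(\<Sum>c\<in>L. mu c * a c * Qit L b (Suc t) c) = (\<Sum>c\<in>L. \<Sum>v\<in>L. mu c * a c * P c v * Qit L b t v)"
    by (simp add: sum_distrib_left algebra_simps)
  also have "\<dots> = (\<Sum>v\<in>L. \<Sum>c\<in>L. mu c * a c * P c v * Qit L b t v)"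
    by (rule sum.swap)
  also have "\<dots> = (\<Sum>v\<in>L. \<Sum>c\<in>L. mu v * (P v c * a c) * Qit L b t v)"
    by (intro sum.cong refl) (metis rev mult.commute mult.assoc)
  also have "\<dots> = (\<Sum>v\<in>L. mu v * (\<Sum>c\<in>L. P v c * a c) * Qit L b t v)"
    by (simp add: sum_distrib_left sum_distrib_right)
  also have "\<dots> = (\<Sum>v\<in>L. mu v * b v * Qit L (\<lambda>y. \<Sum>c\<in>L. P y c * a c) t v)"
    by (rule Suc.IH)
  also have "\<dots> = (\<Sum>c\<in>L. mu c * b c * Qit L a (Suc t) c)"
    by (simp add: Qit_comm)
  finally show ?case .
qed

lemma hit_Qit: "hit P E F n y = (\<Sum>t<n. Qit (-(E\<union>F)) (\<lambda>c. \<Sum>e\<in>E. P c e) t y)"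
proof (induction n arbitrary: y)
  case 0
  then show ?case by simp
next
  case (Suc n)
  show ?case
    unfolding hit_Suc_split Suc sum.lessThan_Suc_shift
    by (simp add: sum_distrib_left) (rule sum.swap)
qed

lemma T3:
  assumes "u \<in> K" "E \<inter> K = {}"
  shows "mu u * hit P E ((-K - E) \<union> {u}) n u \<le> (\<Sum>c\<in>K. \<Sum>y\<in>E. mu c * P c y)"
proof (cases n)
  case 0
  have "0 \<le> (\<Sum>c\<in>K. \<Sum>y\<in>E. mu c * P c y)"
    by (intro sum_nonneg mult_nonneg_nonneg P_nonneg less_imp_le[OF mu_pos])
  then show ?thesis using 0 by simp
next
  case (Suc m)
  define L where "L = K - {u}"
  have L: "-(E \<union> ((-K - E) \<union> {u})) = L" unfolding L_def using assms by auto
  have L2: "-({u} \<union> -K) = L" unfolding L_def by auto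
  define phi where "phi c = (\<Sum>e\<in>E. P c e)" for c
  define psi where "psi c = P c u" for c
  have phinn: "0 \<le> phi c" for c unfolding phi_def by (intro sum_nonneg P_nonneg)
  have "mu u * hit P E ((-K - E) \<union> {u}) n u = mu u * phi u + (\<Sum>v\<in>L. mu u * P u v * hit P E ((-K - E) \<union> {u}) m v)"
    unfolding Suc hit_Suc_split L phi_def by (simp add: sum_distrib_left algebra_simps)
  also have "(\<Sum>v\<in>L. mu u * P u v * hit P E ((-K - E) \<union> {u}) m v) = (\<Sum>v\<in>L. mu v * psi v * (\<Sum>t<m. Qit L phi t v))"
  proof (intro sum.cong refl)
    fix v assume "v \<in> L"
    have "hit P E ((-K - E) \<union> {u}) m v = (\<Sum>t<m. Qit L phi t v)"
      using hit_Qit[of E "(-K - E) \<union> {u}" m v] unfolding L phi_def .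
    then show "mu u * P u v * hit P E ((-K - E) \<union> {u}) m v = mu v * psi v * (\<Sum>t<m. Qit L phi t v)"
      using rev[of u v] by (simp add: psi_def)
  qed
  also have "\<dots> = (\<Sum>t<m. \<Sum>v\<in>L. mu v * psi v * Qit L phi t v)"
    unfolding sum_distrib_left by (rule sum.swap)
  also have "\<dots> = (\<Sum>t<m. \<Sum>v\<in>L. mu v * phi v * Qit L psi t v)"
    by (rule sum.cong[OF refl]) (rule Qit_adjoint)
  also have "\<dots> = (\<Sum>v\<in>L. mu v * phi v * hit P {u} (-K) m v)"
  proof -
    have ps: "(\<lambda>c. \<Sum>e\<in>{u}. P c e) = psi" unfolding psi_def by auto
    have "hit P {u} (-K) m v = (\<Sum>t<m. Qit L psi t v)" for v
      using hit_Qit[of "{u}" "-K" m v] unfolding L2 ps .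
    then show ?thesis by (simp add: sum_distrib_left sum.swap[of _ L])
  qed
  also have "\<dots> \<le> (\<Sum>v\<in>L. mu v * phi v)"
    by (intro sum_mono) (use hit_le_1 mu_pos phinn in \<open>auto intro: mult_left_le mult_nonneg_nonneg less_imp_le\<close>)
  finally have "mu u * hit P E ((-K - E) \<union> {u}) n u \<le> mu u * phi u + (\<Sum>v\<in>L. mu v * phi v)" by simp
  also have "\<dots> = (\<Sum>v\<in>K. mu v * phi v)"
    unfolding L_def using assms(1) by (simp add: sum.remove)
  finally show ?thesis unfolding phi_def by (simp add: sum_distrib_left)
qed

end



context chain
begin

lemma surv_Suc: "1 - hit P E {} (Suc n) y = (\<Sum>w\<in>UNIV. P y w * (if w \<in> E then 0 else 1 - hit P E {} n w))"
proof -
  have "1 - hit P E {} (Suc n) y = (\<Sum>w\<in>UNIV. P y w) - hit P E {} (Suc n) y" using P_stoch by simp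
  also have "\<dots> = (\<Sum>w\<in>UNIV. P y w * (if w \<in> E then 0 else 1 - hit P E {} n w))"
    unfolding hit.simps sum_subtractf[symmetric] by (intro sum.cong refl) (auto simp: algebra_simps)
  finally show ?thesis .
qed

lemma surv_mult:
  assumes "\<And>w. 1 - hit P E {} m w \<le> M"
  shows "1 - hit P E {} (n + m) y \<le> (1 - hit P E {} n y) * M"
proof (induction n arbitrary: y)
  case 0
  then show ?case using assms by simp
next
  case (Suc n)
  have "1 - hit P E {} (Suc n + m) y = (\<Sum>w\<in>UNIV. P y w * (if w \<in> E then 0 else 1 - hit P E {} (n + m) w))"
    using surv_Suc by simp
  also have "\<dots> \<le> (\<Sum>w\<in>UNIV. P y w * ((if w \<in> E then 0 else 1 - hit P E {} n w) * M))"
    by (intro sum_mono mult_left_mono P_nonneg) (use Suc in auto)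
  also have "\<dots> = (1 - hit P E {} (Suc n) y) * M"
    unfolding surv_Suc by (simp add: sum_distrib_right mult.assoc)
  finally show ?case .
qed

lemma surv_pow:
  assumes "\<And>w. 1 - hit P E {} m w \<le> M"
  shows "1 - hit P E {} (k * m) y \<le> M ^ k"
proof (induction k arbitrary: y)
  case 0
  then show ?case by simp
next
  case (Suc k)
  have M0: "0 \<le> M" using assms[of y] hit_le_1[of E "{}" m y] by linarith
  have "1 - hit P E {} (k * m + m) y \<le> (1 - hit P E {} (k * m) y) * M"
    by (rule surv_mult[OF assms])
  also have "\<dots> \<le> M ^ k * M" by (intro mult_right_mono Suc M0)
  finally show ?case by (simp add: add.commute mult.commute)
qed

lemma path_pos:
  assumes "\<omega> \<noteq> []" "last \<omega> \<in> E" "\<forall>i. Suc i < length \<omega> \<longrightarrow> P (\<omega>!i) (\<omega>!Suc i) > 0"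
    "length \<omega> \<le> Suc m"
  shows "(if hd \<omega> \<in> E then 1 else hit P E {} m (hd \<omega>)) > 0"
  using assms
proof (induction \<omega> arbitrary: m)
  case Nil
  then show ?case by simp
next
  case (Cons w \<omega>)
  show ?case
  proof (cases "w \<in> E")
    case True
    then show ?thesis by simp
  next
    case False
    then have ne: "\<omega> \<noteq> []" using Cons.prems by auto
    then obtain m' where m': "m = Suc m'" using Cons.prems(4) by (cases m) auto
    have pw: "P w (hd \<omega>) > 0" using Cons.prems(3)[rule_format, of 0] ne by (auto simp: hd_conv_nth)
    have ih: "(if hd \<omega> \<in> E then 1 else hit P E {} m' (hd \<omega>)) > 0"
    proof (rule Cons.IH[OF ne])
      show "last \<omega> \<in> E" using Cons.prems ne by simp
      show "\<forall>i. Suc i < length \<omega> \<longrightarrow> 0 < P (\<omega> ! i) (\<omega> ! Suc i)"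
        using Cons.prems(3) by (metis Suc_less_eq length_Cons nth_Cons_Suc)
      show "length \<omega> \<le> Suc m'" using Cons.prems(4) m' by simp
    qed
    have "0 < P w (hd \<omega>) * (if hd \<omega> \<in> E then 1 else if hd \<omega> \<in> {} then 0 else hit P E {} m' (hd \<omega>))"
      using pw ih by (auto split: if_splits)
    also have "\<dots> \<le> hit P E {} m w"
      unfolding m' hit.simps
      by (rule member_le_sum) (auto intro!: mult_nonneg_nonneg P_nonneg hit_nonneg)
    finally show ?thesis using False by simp
  qed
qed

lemma recurrence:
  assumes paths: "\<forall>y. \<exists>\<omega>. \<omega> \<noteq> [] \<and> hd \<omega> = y \<and> last \<omega> \<in> E \<and> (\<forall>i. Suc i < length \<omega> \<longrightarrow> P (\<omega>!i) (\<omega>!Suc i) > 0)"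
  shows "hitinf P E {} y = 1"
proof -
  from paths obtain f where f: "\<And>y. f y \<noteq> [] \<and> hd (f y) = y \<and> last (f y) \<in> E \<and> (\<forall>i. Suc i < length (f y) \<longrightarrow> P (f y!i) (f y!Suc i) > 0)"
    by metis
  define m where "m = Max (range (\<lambda>y. length (f y)))"
  have lm: "length (f y) \<le> Suc m" for y unfolding m_def by (intro le_SucI Max_ge) auto
  define h0 where "h0 w = (if w \<in> E then 1 else hit P E {} m w)" for w
  have h0pos: "h0 w > 0" for w
  proof -
    have hw: "hd (f w) = w" using f[of w] by blast
    have "(if hd (f w) \<in> E then 1 else hit P E {} m (hd (f w))) > 0"
      by (rule path_pos) (use f[of w] lm[of w] in auto)
    then show ?thesis unfolding hw h0_def .
  qed
  define p where "p = Min (range h0)"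
  have p_pos: "p > 0" unfolding p_def using h0pos by (subst Min_gr_iff) auto
  have p_le: "p \<le> h0 w" for w unfolding p_def by (rule Min_le) auto
  have hs: "hit P E {} (Suc m) y \<ge> p" for y
  proof -
    have "p = (\<Sum>w\<in>UNIV. P y w * p)" using P_stoch[of y] by (simp add: sum_distrib_right[symmetric])
    also have "\<dots> \<le> (\<Sum>w\<in>UNIV. P y w * h0 w)"
      by (intro sum_mono mult_left_mono p_le P_nonneg)
    also have "\<dots> = hit P E {} (Suc m) y" by (simp add: h0_def cong: if_cong)
    finally show ?thesis .
  qed
  have sk: "1 - hit P E {} (k * Suc m) y \<le> (1 - p) ^ k" for k
    by (rule surv_pow) (use hs in \<open>auto simp: algebra_simps\<close>)
  have "(\<lambda>k. (1 - p) ^ k) \<longlonglongrightarrow> 0"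
  proof (rule LIMSEQ_realpow_zero)
    have "h0 y \<le> 1" unfolding h0_def using hit_le_1[of E "{}" m y] by auto
    then show "0 \<le> 1 - p" using p_le[of y] by linarith
    show "1 - p < 1" using p_pos by simp
  qed
  then have "(\<lambda>k. 1 - (1 - p) ^ k) \<longlonglongrightarrow> 1 - 0" by (intro tendsto_diff tendsto_const)
  moreover have "1 - (1 - p) ^ k \<le> hitinf P E {} y" for k
    using sk[of k] hit_le_hitinf[of E "{}" "k * Suc m" y] by linarith
  ultimately have "1 \<le> hitinf P E {} y"
    by (intro LIMSEQ_le_const2[of "\<lambda>k. 1 - (1 - p) ^ k"]) auto
  then show ?thesis using hitinf_le_1[of E "{}" y] by linarith
qed

end


context revchain
begin

lemma mu_P_col: "(\<Sum>v\<in>UNIV. mu v * P v w) = mu w"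
proof -
  have "(\<Sum>v\<in>UNIV. mu v * P v w) = (\<Sum>v\<in>UNIV. mu w * P w v)" by (intro sum.cong refl) (rule rev)
  also have "\<dots> = mu w" using P_stoch[of w] by (simp add: sum_distrib_left[symmetric])
  finally show ?thesis .
qed

lemma green_identity:
  "(\<Sum>v\<in>UNIV. \<Sum>w\<in>UNIV. mu v * P v w * (h v - h w)^2)
     = 2 * (\<Sum>v\<in>UNIV. mu v * h v * (h v - (\<Sum>w\<in>UNIV. P v w * h w)))"
proof -
  have "(\<Sum>v\<in>UNIV. \<Sum>w\<in>UNIV. mu v * P v w * (h v - h w)^2)
    = (\<Sum>v\<in>UNIV. \<Sum>w\<in>UNIV. mu v * P v w * (h v)^2) - 2 * (\<Sum>v\<in>UNIV. \<Sum>w\<in>UNIV. mu v * P v w * h v * h w)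
      + (\<Sum>v\<in>UNIV. \<Sum>w\<in>UNIV. mu v * P v w * (h w)^2)"
    by (simp add: power2_diff algebra_simps sum.distrib sum_subtractf sum_distrib_left)
  also have "(\<Sum>v\<in>UNIV. \<Sum>w\<in>UNIV. mu v * P v w * (h v)^2) = (\<Sum>v\<in>UNIV. mu v * (h v)^2)"
  proof (intro sum.cong refl)
    fix v show "(\<Sum>w\<in>UNIV. mu v * P v w * (h v)^2) = mu v * (h v)^2"
      using P_stoch[of v] by (simp add: sum_distrib_right[symmetric] sum_distrib_left[symmetric])
  qed
  also have "(\<Sum>v\<in>UNIV. \<Sum>w\<in>UNIV. mu v * P v w * (h w)^2) = (\<Sum>w\<in>UNIV. \<Sum>v\<in>UNIV. mu v * P v w * (h w)^2)"
    by (rule sum.swap)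
  also have "\<dots> = (\<Sum>w\<in>UNIV. mu w * (h w)^2)"
  proof (intro sum.cong refl)
    fix w show "(\<Sum>v\<in>UNIV. mu v * P v w * (h w)^2) = mu w * (h w)^2"
      using mu_P_col[of w] by (simp add: sum_distrib_right[symmetric])
  qed
  also have "(\<Sum>v\<in>UNIV. \<Sum>w\<in>UNIV. mu v * P v w * h v * h w) = (\<Sum>v\<in>UNIV. mu v * h v * (\<Sum>w\<in>UNIV. P v w * h w))"
    by (simp add: sum_distrib_left algebra_simps)
  finally show ?thesis
    by (simp add: algebra_simps power2_eq_square sum_subtractf sum.distrib sum_distrib_left)
qed

lemma cap_dirichlet:
  assumes uF: "u \<notin> F" and rec1: "hitinf P (F \<union> {u}) {} u = 1"
  defines "h \<equiv> (\<lambda>v. if v = u then 1 else if v \<in> F then 0 else hitinf P {u} F v)"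
  shows "2 * (mu u * hitinf P F {u} u) = (\<Sum>v\<in>UNIV. \<Sum>w\<in>UNIV. mu v * P v w * (h v - h w)^2)"
proof -
  have hrec: "hitinf P {u} F v = (\<Sum>w\<in>UNIV. P v w * h w)" for v
    unfolding h_def by (subst hitinf_rec) (intro sum.cong refl, use uF in auto)
  have harm: "mu v * h v * (h v - (\<Sum>w\<in>UNIV. P v w * h w)) = (if v = u then mu u * (1 - hitinf P {u} F u) else 0)" for v
    using hrec[of v] uF unfolding h_def by auto
  have "(\<Sum>v\<in>UNIV. mu v * h v * (h v - (\<Sum>w\<in>UNIV. P v w * h w))) = mu u * (1 - hitinf P {u} F u)"
    unfolding harm by simp
  moreover have "F \<inter> {u} = {}" using uF by auto
  from hitinf_split[OF this, of "{}" u]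
  have "hitinf P F {u} u + hitinf P {u} F u = 1" using rec1 by simp
  ultimately show ?thesis unfolding green_identity by simp
qed

lemma telescope_big_step:
  fixes g :: "nat \<Rightarrow> real"
  assumes "k > 0" "g 0 - g k = 1"
  shows "\<exists>i<k. g i - g (Suc i) \<ge> 1 / real k"
proof (rule ccontr)
  assume "\<not> ?thesis"
  then have lt: "g i - g (Suc i) < 1 / real k" if "i < k" for i using that by auto
  have eq: "(\<Sum>i<k. g i - g (Suc i)) = g 0 - g k" by (induction k) auto
  have "(\<Sum>i<k. g i - g (Suc i)) < (\<Sum>i<k. 1 / real k)"
    by (rule sum_strict_mono) (use assms lt in auto)
  also have "\<dots> = 1" using assms by simp
  finally show False using assms eq by simp
qed

lemma cap_path_bound:
  assumes uF: "u \<notin> F" and rec1: "hitinf P (F \<union> {u}) {} u = 1"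
    and om: "\<omega> \<noteq> []" "hd \<omega> = u" "last \<omega> \<in> F"
  shows "\<exists>i. Suc i < length \<omega> \<and> \<omega>!i \<noteq> \<omega>!Suc i \<and>
     mu (\<omega>!i) * P (\<omega>!i) (\<omega>!Suc i) \<le> 2 * (real (length \<omega> - 1))^2 * (mu u * hitinf P F {u} u)"
proof -
  define h where "h = (\<lambda>v. if v = u then 1 else if v \<in> F then 0 else hitinf P {u} F v)"
  define k where "k = length \<omega> - 1"
  have lk: "length \<omega> = Suc k" unfolding k_def using om by (cases \<omega>) auto
  have k0: "k > 0"
  proof (rule ccontr)
    assume "\<not> k > 0"
    then have "\<omega> = [u]" using lk om by (cases \<omega>) auto
    then show False using om uF by simp
  qed
  have g0: "h (\<omega>!0) = 1" using om unfolding h_def by (simp add: hd_conv_nth[symmetric])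
  have "\<omega>!k \<in> F" using om lk by (simp add: last_conv_nth)
  then have gk: "h (\<omega>!k) = 0" using uF unfolding h_def by (cases "\<omega>!k = u") auto
  obtain i where i: "i < k" "h (\<omega>!i) - h (\<omega>!Suc i) \<ge> 1 / real k"
    using telescope_big_step[of k "\<lambda>i. h (\<omega>!i)"] k0 g0 gk by auto
  have ne: "\<omega>!i \<noteq> \<omega>!Suc i" using i k0 by (auto simp: field_simps)
  have pos: "1 / real k > 0" using k0 by simp
  have "(1 / real k)^2 \<le> (h (\<omega>!i) - h (\<omega>!Suc i))^2"
    using i(2) pos by (intro power_mono) auto
  then have "mu (\<omega>!i) * P (\<omega>!i) (\<omega>!Suc i) * (1 / real k)^2 \<le> mu (\<omega>!i) * P (\<omega>!i) (\<omega>!Suc i) * (h (\<omega>!i) - h (\<omega>!Suc i))^2"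
    by (intro mult_left_mono mult_nonneg_nonneg P_nonneg less_imp_le[OF mu_pos])
  also have "\<dots> \<le> (\<Sum>w\<in>UNIV. mu (\<omega>!i) * P (\<omega>!i) w * (h (\<omega>!i) - h w)^2)"
    by (rule member_le_sum[where f="\<lambda>w. mu (\<omega>!i) * P (\<omega>!i) w * (h (\<omega>!i) - h w)^2"])
       (auto intro!: mult_nonneg_nonneg P_nonneg less_imp_le[OF mu_pos])
  also have "\<dots> \<le> (\<Sum>v\<in>UNIV. \<Sum>w\<in>UNIV. mu v * P v w * (h v - h w)^2)"
    by (rule member_le_sum[where f="\<lambda>v. \<Sum>w\<in>UNIV. mu v * P v w * (h v - h w)^2"])
       (auto intro!: sum_nonneg mult_nonneg_nonneg P_nonneg less_imp_le[OF mu_pos])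
  also have "\<dots> = 2 * (mu u * hitinf P F {u} u)"
    unfolding h_def by (rule cap_dirichlet[OF uF rec1, symmetric])
  finally have "mu (\<omega>!i) * P (\<omega>!i) (\<omega>!Suc i) \<le> 2 * (real k)^2 * (mu u * hitinf P F {u} u)"
    using k0 by (simp add: field_simps power2_eq_square)
  then show ?thesis using i ne lk unfolding k_def by (intro exI[of _ i]) auto
qed

end


context chain
begin

fun gvis :: "'a set \<Rightarrow> 'a \<Rightarrow> nat \<Rightarrow> 'a \<Rightarrow> real" where
  "gvis D w 0 y = 0"
| "gvis D w (Suc n) y = (if y = w then 1 else 0) + (\<Sum>v\<in>-D. P y v * gvis D w n v)"

lemma hit_single_target:
  assumes "w \<notin> D"
  shows "hit P {w} D (Suc n) y = (\<Sum>v\<in>-D. P y v * (if v = w then 1 else hit P {w} D n v))"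
proof -
  have "hit P {w} D (Suc n) y = (\<Sum>v\<in>UNIV. P y v * (if v \<in> {w} then 1 else if v \<in> D then 0 else hit P {w} D n v))"
    by simp
  also have "\<dots> = (\<Sum>v\<in>-D. P y v * (if v \<in> {w} then 1 else if v \<in> D then 0 else hit P {w} D n v))
      + (\<Sum>v\<in>-(-D). P y v * (if v \<in> {w} then 1 else if v \<in> D then 0 else hit P {w} D n v))"
    by (rule sum_split_compl)
  also have "(\<Sum>v\<in>-(-D). P y v * (if v \<in> {w} then 1 else if v \<in> D then 0 else hit P {w} D n v)) = 0"
    using assms by (intro sum.neutral) auto
  also have "(\<Sum>v\<in>-D. P y v * (if v \<in> {w} then 1 else if v \<in> D then 0 else hit P {w} D n v))
     = (\<Sum>v\<in>-D. P y v * (if v = w then 1 else hit P {w} D n v))"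
    by (intro sum.cong refl) auto
  finally show ?thesis by simp
qed

lemma gvis_bound:
  assumes wD: "w \<notin> D" and e: "hitinf P D {w} w > 0"
  shows "gvis D w n y \<le> (1 / hitinf P D {w} w) * (if y = w then 1 else hit P {w} D n y)"
proof (induction n arbitrary: y)
  case 0
  have "0 \<le> (1 / hitinf P D {w} w) * (if y = w then 1 else hit P {w} D 0 y)"
    using e by simp
  then show ?case by simp
next
  case (Suc n)
  define M where "M = 1 / hitinf P D {w} w"
  have M0: "M \<ge> 0" unfolding M_def using e by simp
  have step: "(\<Sum>v\<in>-D. P y v * gvis D w n v) \<le> M * hit P {w} D (Suc n) y"
  proof -
    have "(\<Sum>v\<in>-D. P y v * gvis D w n v) \<le> (\<Sum>v\<in>-D. P y v * (M * (if v = w then 1 else hit P {w} D n v)))"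
      by (intro sum_mono mult_left_mono P_nonneg) (use Suc in \<open>simp add: M_def\<close>)
    also have "\<dots> = M * hit P {w} D (Suc n) y"
      unfolding hit_single_target[OF wD] by (simp add: sum_distrib_left algebra_simps)
    finally show ?thesis .
  qed
  show ?case
  proof (cases "y = w")
    case True
    have "gvis D w (Suc n) y \<le> 1 + M * hit P {w} D (Suc n) w" using step True by simp
    also have "\<dots> \<le> 1 + M * hitinf P {w} D w"
      by (intro add_left_mono mult_left_mono M0 hit_le_hitinf)
    also have "\<dots> \<le> 1 + M * (1 - hitinf P D {w} w)"
    proof -
      have "{w} \<inter> D = {}" using wD by auto
      from hitinf_split[OF this, of "{}" w]
      have "hitinf P {w} D w + hitinf P D {w} w \<le> 1" using hitinf_le_1[of "{w} \<union> D" "{}" w] by simp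
      then show ?thesis by (intro add_left_mono mult_left_mono M0) linarith
    qed
    also have "\<dots> = M" unfolding M_def using e by (simp add: field_simps)
    finally show ?thesis using True unfolding M_def by simp
  next
    case False
    then show ?thesis using step unfolding M_def by simp
  qed
qed

lemma occupation:
  assumes "y \<in> -D"
  shows "(\<Sum>w\<in>-D. gvis D w n y) = (\<Sum>t<n. 1 - hit P D {} t y)"
  using assms
proof (induction n arbitrary: y)
  case 0
  then show ?case by simp
next
  case (Suc n)
  have "(\<Sum>w\<in>-D. gvis D w (Suc n) y) = (\<Sum>w\<in>-D. if y = w then 1 else 0) + (\<Sum>w\<in>-D. \<Sum>v\<in>-D. P y v * gvis D w n v)"
    by (simp add: sum.distrib)
  also have "(\<Sum>w\<in>-D. if y = w then 1 else 0) = (1::real)"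
    using Suc.prems by (simp add: sum.delta)
  also have "(\<Sum>w\<in>-D. \<Sum>v\<in>-D. P y v * gvis D w n v) = (\<Sum>v\<in>-D. P y v * (\<Sum>w\<in>-D. gvis D w n v))"
    unfolding sum_distrib_left by (rule sum.swap)
  also have "\<dots> = (\<Sum>v\<in>-D. P y v * (\<Sum>t<n. 1 - hit P D {} t v))"
    by (intro sum.cong refl) (simp add: Suc.IH)
  also have "\<dots> = (\<Sum>t<n. \<Sum>v\<in>-D. P y v * (1 - hit P D {} t v))"
    unfolding sum_distrib_left by (rule sum.swap)
  also have "\<dots> = (\<Sum>t<n. 1 - hit P D {} (Suc t) y)"
  proof (intro sum.cong refl)
    fix t
    have "1 - hit P D {} (Suc t) y = (\<Sum>v\<in>UNIV. P y v * (if v \<in> D then 0 else 1 - hit P D {} t v))"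
      by (rule surv_Suc)
    also have "\<dots> = (\<Sum>v\<in>-D. P y v * (1 - hit P D {} t v))"
    proof -
      have "(\<Sum>v\<in>UNIV. P y v * (if v \<in> D then 0 else 1 - hit P D {} t v))
         = (\<Sum>v\<in>-D. P y v * (if v \<in> D then 0 else 1 - hit P D {} t v))
         + (\<Sum>v\<in>-(-D). P y v * (if v \<in> D then 0 else 1 - hit P D {} t v))"
        by (rule sum_split_compl)
      then show ?thesis by simp
    qed
    finally show "(\<Sum>v\<in>-D. P y v * (1 - hit P D {} t v)) = 1 - hit P D {} (Suc t) y" by simp
  qed
  finally have X: "(\<Sum>w\<in>-D. gvis D w (Suc n) y) = 1 + (\<Sum>t<n. 1 - hit P D {} (Suc t) y)" .
  have sh: "(\<Sum>t<Suc n. 1 - hit P D {} t y) = (1 - hit P D {} 0 y) + (\<Sum>t<n. 1 - hit P D {} (Suc t) y)"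
    by (rule sum.lessThan_Suc_shift)
  have h0: "hit P D {} 0 y = 0" by simp
  show ?case using X sh h0 by linarith
qed

lemma green_bound:
  assumes yD: "y \<notin> D" and pos: "\<And>w. w \<notin> D \<Longrightarrow> hitinf P D {w} w > 0"
  shows "real n * (1 - hit P D {} n y) \<le> (\<Sum>w\<in>-D. 1 / hitinf P D {w} w)"
proof -
  have "real n * (1 - hit P D {} n y) = (\<Sum>t<n. 1 - hit P D {} n y)" by simp
  also have "\<dots> \<le> (\<Sum>t<n. 1 - hit P D {} t y)"
    by (intro sum_mono) (auto intro: hit_mono_n)
  also have "\<dots> = (\<Sum>w\<in>-D. gvis D w n y)" using occupation[of y D n] yD by simp
  also have "\<dots> \<le> (\<Sum>w\<in>-D. 1 / hitinf P D {w} w)"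
  proof (intro sum_mono)
    fix w assume w: "w \<in> -D"
    have "gvis D w n y \<le> (1 / hitinf P D {w} w) * (if y = w then 1 else hit P {w} D n y)"
      by (rule gvis_bound) (use w pos in auto)
    also have "\<dots> \<le> (1 / hitinf P D {w} w) * 1"
      by (intro mult_left_mono) (use pos w hit_le_1 in \<open>auto intro: less_imp_le\<close>)
    finally show "gvis D w n y \<le> 1 / hitinf P D {w} w" by simp
  qed
  finally show ?thesis .
qed

end



lemma is_path_single[simp]: "is_path q [a]"
  by (simp add: is_path_def)

lemma is_path_Cons2: "is_path q (a # b # \<omega>) \<longleftrightarrow> q a b > 0 \<and> is_path q (b # \<omega>)"
proof
  assume h: "is_path q (a # b # \<omega>)"
  then have "q a b > 0" unfolding is_path_def by (metis Suc_less_eq length_Cons nth_Cons_0 nth_Cons_Suc zero_less_Suc)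
  moreover have "is_path q (b # \<omega>)" using h unfolding is_path_def
    by (metis Suc_less_eq length_Cons list.distinct(1) nth_Cons_Suc)
  ultimately show "q a b > 0 \<and> is_path q (b # \<omega>)" by blast
next
  assume h: "q a b > 0 \<and> is_path q (b # \<omega>)"
  show "is_path q (a # b # \<omega>)" unfolding is_path_def
  proof (intro conjI allI impI)
    show "a # b # \<omega> \<noteq> []" by simp
    fix i assume i: "Suc i < length (a # b # \<omega>)"
    show "0 < q ((a # b # \<omega>) ! i) ((a # b # \<omega>) ! Suc i)"
    proof (cases i)
      case 0 then show ?thesis using h by simp
    next
      case (Suc j) then show ?thesis using h i unfolding is_path_def by auto
    qed
  qed
qed

lemma is_path_Cons: "is_path q (a # \<omega>) \<longleftrightarrow> \<omega> = [] \<or> (q a (hd \<omega>) > 0 \<and> is_path q \<omega>)"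
  by (cases \<omega>) (auto simp: is_path_Cons2)

lemma is_path_append:
  assumes "is_path q \<omega>1" "is_path q \<omega>2" "q (last \<omega>1) (hd \<omega>2) > 0"
  shows "is_path q (\<omega>1 @ \<omega>2)"
  using assms
proof (induction \<omega>1)
  case Nil
  then show ?case by (simp add: is_path_def)
next
  case (Cons a \<omega>1)
  show ?case
  proof (cases "\<omega>1 = []")
    case True
    then show ?thesis using Cons.prems by (simp add: is_path_Cons)
  next
    case False
    have "is_path q \<omega>1" using Cons.prems(1) False by (simp add: is_path_Cons)
    then have "is_path q (\<omega>1 @ \<omega>2)" using Cons.IH Cons.prems False by simp
    moreover have "q a (hd \<omega>1) > 0" using Cons.prems(1) False by (simp add: is_path_Cons)
    ultimately show ?thesis using False by (simp add: is_path_Cons)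
  qed
qed

lemma is_path_join:
  assumes "is_path q \<omega>1" "is_path q \<omega>2" "last \<omega>1 = hd \<omega>2"
  shows "is_path q (\<omega>1 @ tl \<omega>2)"
proof (cases "tl \<omega>2 = []")
  case True
  then show ?thesis using assms by simp
next
  case False
  have ne: "\<omega>2 \<noteq> []" using assms is_path_def by blast
  then have "\<omega>2 = hd \<omega>2 # tl \<omega>2" by simp
  then have "q (hd \<omega>2) (hd (tl \<omega>2)) > 0 \<and> is_path q (tl \<omega>2)"
    using assms(2) False by (metis is_path_Cons)
  then show ?thesis using assms by (intro is_path_append) auto
qed

lemma is_path_rev:
  assumes sym: "\<forall>u v. q u v = q v u" and "is_path q \<omega>"
  shows "is_path q (rev \<omega>)"
  using assms(2)
proof (induction \<omega>)
  case Nil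
  then show ?case by (simp add: is_path_def)
next
  case (Cons a \<omega>)
  show ?case
  proof (cases "\<omega> = []")
    case True
    then show ?thesis by simp
  next
    case False
    have p: "is_path q \<omega>" "q a (hd \<omega>) > 0" using Cons.prems False by (auto simp: is_path_Cons)
    have "is_path q (rev \<omega> @ [a])"
      by (rule is_path_append) (use Cons.IH p False sym in \<open>auto simp: last_rev\<close>)
    then show ?thesis by simp
  qed
qed

lemma is_path_take:
  assumes "is_path q \<omega>" "0 < j"
  shows "is_path q (take j \<omega>)"
  using assms unfolding is_path_def by (auto simp: nth_take)

lemma path_height_ge: "a \<in> set \<omega> \<Longrightarrow> H a \<le> path_height H \<omega>"
  unfolding path_height_def by (rule Max_ge) auto

lemma path_height_in: "\<omega> \<noteq> [] \<Longrightarrow> path_height H \<omega> \<in> H ` set \<omega>"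
  unfolding path_height_def by (rule Max_in) auto

lemma path_height_le: "\<omega> \<noteq> [] \<Longrightarrow> (\<And>a. a \<in> set \<omega> \<Longrightarrow> H a \<le> c) \<Longrightarrow> path_height H \<omega> \<le> c"
  unfolding path_height_def by (subst Max_le_iff) auto

lemma path_height_single[simp]: "path_height H [a] = H a"
  unfolding path_height_def by simp

lemma path_height_pair: "path_height H [a, b] = max (H a) (H b)"
  unfolding path_height_def by (simp add: max.commute)

locale landscape =
  fixes H :: "'a::finite \<Rightarrow> real" and q :: "'a \<Rightarrow> 'a \<Rightarrow> real"
  assumes q_range: "\<forall>u v. 0 \<le> q u v \<and> q u v \<le> 1"
    and q_stoch: "\<forall>u. (\<Sum>v\<in>UNIV. q u v) = 1"
    and q_sym: "\<forall>u v. q u v = q v u"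
    and q_irred: "\<forall>u v. \<exists>\<omega>. path_from_to q \<omega> u v"
begin

abbreviation "Phi \<equiv> comm_height H q"
abbreviation "PhiS \<equiv> comm_height_set H q"

lemma heights_finite: "finite {path_height H \<omega> | \<omega>. path_from_to q \<omega> a b}"
proof (rule finite_subset[of _ "range H"])
  show "{path_height H \<omega> | \<omega>. path_from_to q \<omega> a b} \<subseteq> range H"
    using path_height_in unfolding path_from_to_def is_path_def by fastforce
qed simp

lemma Phi_le: "path_from_to q \<omega> a b \<Longrightarrow> Phi a b \<le> path_height H \<omega>"
  unfolding comm_height_def by (rule Min_le) (use heights_finite in auto)

lemma Phi_attained: "\<exists>\<omega>. path_from_to q \<omega> a b \<and> path_height H \<omega> = Phi a b"
proof -
  have "Phi a b \<in> {path_height H \<omega> | \<omega>. path_from_to q \<omega> a b}"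
    unfolding comm_height_def by (rule Min_in) (use heights_finite q_irred in auto)
  then show ?thesis by auto
qed

lemma Phi_ge_H: "H a \<le> Phi a b" "H b \<le> Phi a b"
proof -
  obtain \<omega> where \<omega>: "path_from_to q \<omega> a b" "path_height H \<omega> = Phi a b" using Phi_attained by blast
  have ne: "\<omega> \<noteq> []" using \<omega> unfolding path_from_to_def is_path_def by auto
  have "a \<in> set \<omega>" "b \<in> set \<omega>" using \<omega> ne unfolding path_from_to_def by auto
  then show "H a \<le> Phi a b" "H b \<le> Phi a b" using path_height_ge \<omega> by metis+
qed

lemma Phi_refl: "Phi a a = H a"
proof -
  have "path_from_to q [a] a a" unfolding path_from_to_def by simp
  then have "Phi a a \<le> H a" using Phi_le by fastforce
  then show ?thesis using Phi_ge_H(1)[of a a] by simp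
qed

lemma Phi_edge: "q a b > 0 \<Longrightarrow> Phi a b \<le> max (H a) (H b)"
proof -
  assume "q a b > 0"
  then have "path_from_to q [a, b] a b" unfolding path_from_to_def by (simp add: is_path_Cons2)
  then show ?thesis using Phi_le path_height_pair by metis
qed

lemma path_join_ft:
  assumes "path_from_to q \<omega>1 a b" "path_from_to q \<omega>2 b c"
  shows "path_from_to q (\<omega>1 @ tl \<omega>2) a c \<and> path_height H (\<omega>1 @ tl \<omega>2) \<le> max (path_height H \<omega>1) (path_height H \<omega>2)
     \<and> set (\<omega>1 @ tl \<omega>2) \<subseteq> set \<omega>1 \<union> set \<omega>2"
proof -
  have ne: "\<omega>1 \<noteq> []" "\<omega>2 \<noteq> []" using assms unfolding path_from_to_def is_path_def by auto
  have p: "is_path q (\<omega>1 @ tl \<omega>2)" using assms by (intro is_path_join) (auto simp: path_from_to_def)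
  have l: "last (\<omega>1 @ tl \<omega>2) = c"
  proof (cases "tl \<omega>2 = []")
    case True
    then have "\<omega>2 = [hd \<omega>2]" using ne by (metis list.collapse)
    then show ?thesis using assms True unfolding path_from_to_def by (metis append_Nil2 last_ConsL)
  next
    case False
    then show ?thesis using assms ne unfolding path_from_to_def by (simp add: last_tl)
  qed
  have s: "set (\<omega>1 @ tl \<omega>2) \<subseteq> set \<omega>1 \<union> set \<omega>2" using ne by (auto simp: list.set_sel(2))
  have h: "path_height H (\<omega>1 @ tl \<omega>2) \<le> max (path_height H \<omega>1) (path_height H \<omega>2)"
    by (rule path_height_le) (use ne s in \<open>auto intro: max.coboundedI1 max.coboundedI2 path_height_ge\<close>)
  show ?thesis using p l h s assms ne unfolding path_from_to_def by simp
qed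

lemma Phi_trans: "Phi a c \<le> max (Phi a b) (Phi b c)"
proof -
  obtain \<omega>1 where 1: "path_from_to q \<omega>1 a b" "path_height H \<omega>1 = Phi a b" using Phi_attained by blast
  obtain \<omega>2 where 2: "path_from_to q \<omega>2 b c" "path_height H \<omega>2 = Phi b c" using Phi_attained by blast
  from path_join_ft[OF 1(1) 2(1)] 1 2 show ?thesis using Phi_le by fastforce
qed

lemma path_rev_ft:
  assumes "path_from_to q \<omega> a b"
  shows "path_from_to q (rev \<omega>) b a \<and> path_height H (rev \<omega>) = path_height H \<omega> \<and> set (rev \<omega>) = set \<omega>"
  using assms is_path_rev[OF q_sym] unfolding path_from_to_def path_height_def
  by (auto simp: hd_rev last_rev is_path_def)

lemma Phi_sym: "Phi a b = Phi b a"
proof -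
  have "Phi b a \<le> Phi a b" if "True" for a b
  proof -
    obtain \<omega> where 1: "path_from_to q \<omega> a b" "path_height H \<omega> = Phi a b" using Phi_attained by blast
    then show ?thesis using path_rev_ft[OF 1(1)] Phi_le by metis
  qed
  then show ?thesis by (metis order_antisym)
qed

lemma PhiS_finite: "finite {Phi a b | a b. a \<in> B \<and> b \<in> D}"
proof -
  have "{Phi a b | a b. a \<in> B \<and> b \<in> D} \<subseteq> (\<lambda>(a,b). Phi a b) ` UNIV" by auto
  then show ?thesis by (rule finite_subset) simp
qed

lemma PhiS_le: "a \<in> B \<Longrightarrow> b \<in> D \<Longrightarrow> PhiS B D \<le> Phi a b"
  unfolding comm_height_set_def by (rule Min_le) (use PhiS_finite in auto)

lemma PhiS_attained: "B \<noteq> {} \<Longrightarrow> D \<noteq> {} \<Longrightarrow> \<exists>a\<in>B. \<exists>b\<in>D. PhiS B D = Phi a b"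
proof -
  assume "B \<noteq> {}" "D \<noteq> {}"
  then have "PhiS B D \<in> {Phi a b | a b. a \<in> B \<and> b \<in> D}"
    unfolding comm_height_set_def by (intro Min_in PhiS_finite) auto
  then show ?thesis by auto
qed

lemma PhiS_ge: "B \<noteq> {} \<Longrightarrow> D \<noteq> {} \<Longrightarrow> (\<And>a b. a \<in> B \<Longrightarrow> b \<in> D \<Longrightarrow> c \<le> Phi a b) \<Longrightarrow> c \<le> PhiS B D"
  using PhiS_attained by metis

end



context chain
begin
lemma hitinf_bound: "(\<And>n. hit P E F n y \<le> B) \<Longrightarrow> hitinf P E F y \<le> B"
  unfolding hitinf_def by (rule cSUP_least) auto
end

context landscape
begin

lemma metro_offdiag: "u \<noteq> v \<Longrightarrow> metro H q \<beta> u v = q u v * exp (- \<beta> * max 0 (H v - H u))"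
  unfolding metro_def by simp

lemma q_nonneg: "0 \<le> q u v" using q_range by blast
lemma q_le1: "q u v \<le> 1" using q_range by blast

lemma sum_q_off: "(\<Sum>z\<in>UNIV - {u}. q u z) = 1 - q u u"
proof -
  have "(\<Sum>z\<in>UNIV. q u z) = q u u + (\<Sum>z\<in>UNIV - {u}. q u z)" by (rule sum.remove) auto
  then show ?thesis using q_stoch by simp
qed

lemma metro_nonneg:
  assumes "\<beta> \<ge> 0" shows "0 \<le> metro H q \<beta> u v"
proof (cases "u = v")
  case True
  have "(\<Sum>z\<in>UNIV - {u}. q u z * exp (- \<beta> * max 0 (H z - H u))) \<le> (\<Sum>z\<in>UNIV - {u}. q u z)"
  proof (intro sum_mono)
    fix z
    have "exp (- \<beta> * max 0 (H z - H u)) \<le> 1" using assms by (simp add: mult_nonneg_nonneg)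
    then show "q u z * exp (- \<beta> * max 0 (H z - H u)) \<le> q u z" using q_nonneg[of u z] by (simp add: mult_left_le)
  qed
  then show ?thesis using True sum_q_off[of u] q_nonneg[of u u] unfolding metro_def by simp
next
  case False
  then show ?thesis unfolding metro_def by (simp add: q_nonneg)
qed

lemma metro_stoch: "(\<Sum>v\<in>UNIV. metro H q \<beta> u v) = 1"
proof -
  have "(\<Sum>v\<in>UNIV. metro H q \<beta> u v) = metro H q \<beta> u u + (\<Sum>v\<in>UNIV - {u}. metro H q \<beta> u v)"
    by (rule sum.remove) auto
  also have "(\<Sum>v\<in>UNIV - {u}. metro H q \<beta> u v) = (\<Sum>z\<in>UNIV - {u}. q u z * exp (- \<beta> * max 0 (H z - H u)))"
    by (intro sum.cong refl) (auto simp: metro_def)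
  finally show ?thesis unfolding metro_def by simp
qed

lemma mu_metro:
  assumes "u \<noteq> v"
  shows "exp (- \<beta> * H u) * metro H q \<beta> u v = q u v * exp (- \<beta> * max (H u) (H v))"
proof -
  have "- \<beta> * H u + - \<beta> * max 0 (H v - H u) = - \<beta> * max (H u) (H v)"
    by (simp add: max_def algebra_simps)
  then have "exp (- \<beta> * H u) * exp (- \<beta> * max 0 (H v - H u)) = exp (- \<beta> * max (H u) (H v))"
    by (metis exp_add)
  then show ?thesis using assms unfolding metro_def by (simp add: algebra_simps)
qed

lemma metro_rev: "exp (- \<beta> * H u) * metro H q \<beta> u v = exp (- \<beta> * H v) * metro H q \<beta> v u"
proof (cases "u = v")
  case True then show ?thesis by simp
next
  case False
  then show ?thesis using mu_metro[of u v \<beta>] mu_metro[of v u \<beta>] q_sym by (simp add: max.commute)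
qed

lemma metro_pos:
  assumes "\<beta> \<ge> 0" "q u v > 0" shows "metro H q \<beta> u v > 0"
proof (cases "u = v")
  case True
  have "(\<Sum>z\<in>UNIV - {u}. q u z * exp (- \<beta> * max 0 (H z - H u))) \<le> (\<Sum>z\<in>UNIV - {u}. q u z)"
  proof (intro sum_mono)
    fix z
    have "exp (- \<beta> * max 0 (H z - H u)) \<le> 1" using assms by (simp add: mult_nonneg_nonneg)
    then show "q u z * exp (- \<beta> * max 0 (H z - H u)) \<le> q u z" using q_nonneg[of u z] by (simp add: mult_left_le)
  qed
  then show ?thesis using True sum_q_off[of u] assms unfolding metro_def by simp
next
  case False
  then show ?thesis using assms unfolding metro_def by simp
qed

lemma metro_revchain: "\<beta> \<ge> 0 \<Longrightarrow> revchain (metro H q \<beta>) (\<lambda>y. exp (- \<beta> * H y))"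
  unfolding revchain_def revchain_axioms_def chain_def
  using metro_nonneg metro_stoch metro_rev by auto

lemma hit_le_eq: "hit_le H q \<beta> A n y = hit (metro H q \<beta>) A {} n y"
  by (induction n arbitrary: y) (simp_all cong: if_cong)

definition qmin where "qmin = Min {q u v | u v. q u v > 0}"

lemma qmin_finite: "finite {q u v | u v. q u v > 0}"
proof -
  have "{q u v | u v. q u v > 0} \<subseteq> (\<lambda>(u,v). q u v) ` UNIV" by auto
  then show ?thesis by (rule finite_subset) simp
qed

lemma qmin_le: "q u v > 0 \<Longrightarrow> qmin \<le> q u v"
  unfolding qmin_def by (rule Min_le) (use qmin_finite in auto)

lemma qmin_pos: "qmin > 0"
proof -
  obtain u :: 'a where True by blast
  have "\<exists>v. q u v > 0"
  proof (rule ccontr)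
    assume "\<not> ?thesis"
    then have "\<forall>v. q u v = 0" using q_nonneg by (metis less_eq_real_def)
    then have "(\<Sum>v\<in>UNIV. q u v) = 0" by simp
    then show False using q_stoch by simp
  qed
  then obtain v where v: "q u v > 0" by blast
  have ne: "{q u v | u v. q u v > 0} \<noteq> {}" using v by auto
  have "qmin \<in> {q u v | u v. q u v > 0}" unfolding qmin_def by (rule Min_in[OF qmin_finite ne])
  then show ?thesis by auto
qed

lemma qpath_metro_pos:
  assumes "\<beta> \<ge> 0" "is_path q \<omega>"
  shows "\<forall>i. Suc i < length \<omega> \<longrightarrow> metro H q \<beta> (\<omega>!i) (\<omega>!Suc i) > 0"
  using assms metro_pos unfolding is_path_def by blast

lemma recurrence_metro:
  assumes "\<beta> \<ge> 0" "F \<noteq> {}"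
  shows "hitinf (metro H q \<beta>) F {} y = 1"
proof -
  interpret revchain "metro H q \<beta>" "\<lambda>y. exp (- \<beta> * H y)" using metro_revchain[OF assms(1)] .
  show ?thesis
  proof (rule recurrence, intro allI)
    fix y
    obtain f where f: "f \<in> F" using assms by auto
    obtain \<omega> where \<omega>: "path_from_to q \<omega> y f" using q_irred by blast
    show "\<exists>\<omega>. \<omega> \<noteq> [] \<and> hd \<omega> = y \<and> last \<omega> \<in> F \<and> (\<forall>i. Suc i < length \<omega> \<longrightarrow> 0 < metro H q \<beta> (\<omega> ! i) (\<omega> ! Suc i))"
      using \<omega> f qpath_metro_pos[OF assms(1)] unfolding path_from_to_def is_path_def by blast
  qed
qed

lemma cap_lower:
  assumes b0: "\<beta> \<ge> 0" and uF: "u \<notin> F" and \<omega>: "path_from_to q \<omega> u f" and fF: "f \<in> F"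
  shows "qmin * exp (- \<beta> * path_height H \<omega>) \<le> 2 * (real (length \<omega> - 1))^2 * (exp (- \<beta> * H u) * hitinf (metro H q \<beta>) F {u} u)"
proof -
  interpret revchain "metro H q \<beta>" "\<lambda>y. exp (- \<beta> * H y)" using metro_revchain[OF b0] .
  have rec1: "hitinf (metro H q \<beta>) (F \<union> {u}) {} u = 1" by (rule recurrence_metro[OF b0]) auto
  have ne: "\<omega> \<noteq> []" "hd \<omega> = u" "last \<omega> \<in> F" using \<omega> fF unfolding path_from_to_def is_path_def by auto
  obtain i where i: "Suc i < length \<omega>" "\<omega>!i \<noteq> \<omega>!Suc i"
    "exp (- \<beta> * H (\<omega>!i)) * metro H q \<beta> (\<omega>!i) (\<omega>!Suc i) \<le> 2 * (real (length \<omega> - 1))^2 * (exp (- \<beta> * H u) * hitinf (metro H q \<beta>) F {u} u)"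
    using cap_path_bound[OF uF rec1 ne] by blast
  have qpos: "q (\<omega>!i) (\<omega>!Suc i) > 0" using \<omega> i unfolding path_from_to_def is_path_def by blast
  have "max (H (\<omega>!i)) (H (\<omega>!Suc i)) \<le> path_height H \<omega>"
    using i by (auto intro!: path_height_ge)
  then have "exp (- \<beta> * path_height H \<omega>) \<le> exp (- \<beta> * max (H (\<omega>!i)) (H (\<omega>!Suc i)))"
    using b0 by (simp add: mult_left_mono)
  then have "qmin * exp (- \<beta> * path_height H \<omega>) \<le> q (\<omega>!i) (\<omega>!Suc i) * exp (- \<beta> * max (H (\<omega>!i)) (H (\<omega>!Suc i)))"
    using qmin_le[OF qpos] qmin_pos by (intro mult_mono) auto
  also have "\<dots> = exp (- \<beta> * H (\<omega>!i)) * metro H q \<beta> (\<omega>!i) (\<omega>!Suc i)"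
    using mu_metro[OF i(2)] by simp
  finally show ?thesis using i(3) by linarith
qed

lemma flux_bound:
  assumes b0: "\<beta> \<ge> 0" and KE: "K \<inter> E = {}"
    and lev: "\<And>c y. c \<in> K \<Longrightarrow> y \<in> E \<Longrightarrow> q c y > 0 \<Longrightarrow> S \<le> max (H c) (H y)"
  shows "(\<Sum>c\<in>K. \<Sum>y\<in>E. exp (- \<beta> * H c) * metro H q \<beta> c y) \<le> real (card (UNIV :: 'a set))^2 * exp (- \<beta> * S)"
proof -
  have t: "exp (- \<beta> * H c) * metro H q \<beta> c y \<le> exp (- \<beta> * S)" if "c \<in> K" "y \<in> E" for c y
  proof -
    have cy: "c \<noteq> y" using that KE by auto
    show ?thesis
    proof (cases "q c y > 0")
      case True
      have "exp (- \<beta> * max (H c) (H y)) \<le> exp (- \<beta> * S)"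
        using lev[OF that True] b0 by (simp add: mult_left_mono)
      then have "q c y * exp (- \<beta> * max (H c) (H y)) \<le> 1 * exp (- \<beta> * S)"
        using q_le1[of c y] by (intro mult_mono) auto
      then show ?thesis using mu_metro[OF cy] by simp
    next
      case False
      then have "q c y = 0" using q_nonneg[of c y] by simp
      then show ?thesis using mu_metro[OF cy] by simp
    qed
  qed
  have "(\<Sum>c\<in>K. \<Sum>y\<in>E. exp (- \<beta> * H c) * metro H q \<beta> c y) \<le> (\<Sum>c\<in>K. \<Sum>y\<in>E. exp (- \<beta> * S))"
    by (intro sum_mono t)
  also have "\<dots> = real (card K) * real (card E) * exp (- \<beta> * S)" by simp
  also have "\<dots> \<le> real (card (UNIV :: 'a set)) * real (card (UNIV :: 'a set)) * exp (- \<beta> * S)"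
    by (intro mult_right_mono mult_mono) (auto intro: card_mono)
  finally show ?thesis by (simp add: power2_eq_square)
qed


lemma ratio_bound:
  assumes b0: "\<beta> \<ge> 0" and uK: "u \<in> K" and EK: "E \<inter> K = {}" and KF: "-K - E \<subseteq> F"
    and uF: "u \<notin> F" and EF: "E \<inter> F = {}"
    and lev: "\<And>c y. c \<in> K \<Longrightarrow> y \<in> E \<Longrightarrow> q c y > 0 \<Longrightarrow> S \<le> max (H c) (H y)"
    and \<omega>: "path_from_to q \<omega> u f" and fF: "f \<in> F"
  shows "hitinf (metro H q \<beta>) E F u \<le>
    (2 * (real (length \<omega> - 1))^2 * (real (card (UNIV :: 'a set)))^2 / qmin) * exp (- \<beta> * (S - path_height H \<omega>))"
proof -
  interpret revchain "metro H q \<beta>" "\<lambda>y. exp (- \<beta> * H y)" using metro_revchain[OF b0] .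
  define m where "m = exp (- \<beta> * H u)"
  define p where "p = hitinf (metro H q \<beta>) E F u"
  define e where "e = hitinf (metro H q \<beta>) F {u} u"
  define a2 where "a2 = hitinf (metro H q \<beta>) E ((-K - E) \<union> {u}) u"
  define k2 where "k2 = 2 * (real (length \<omega> - 1))^2"
  define C2 where "C2 = (real (card (UNIV :: 'a set)))^2"
  define h where "h = path_height H \<omega>"
  have m0: "m > 0" unfolding m_def by simp
  have uE: "u \<notin> E" using uK EK by auto
  have ren: "p * e \<le> hitinf (metro H q \<beta>) E (F \<union> {u}) u"
    unfolding p_def e_def by (rule hitinf_renewal[OF uE uF EF])
  also have "\<dots> \<le> a2" unfolding a2_def by (rule hitinf_mono_sets) (use KF in auto)
  finally have pe: "p * e \<le> a2" .
  have "a2 \<le> (\<Sum>c\<in>K. \<Sum>y\<in>E. exp (- \<beta> * H c) * metro H q \<beta> c y) / m"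
    unfolding a2_def
  proof (rule hitinf_bound)
    fix n
    have "m * hit (metro H q \<beta>) E ((-K - E) \<union> {u}) n u \<le> (\<Sum>c\<in>K. \<Sum>y\<in>E. exp (- \<beta> * H c) * metro H q \<beta> c y)"
      unfolding m_def by (rule T3[OF uK]) (use EK in auto)
    then show "hit (metro H q \<beta>) E ((-K - E) \<union> {u}) n u \<le> (\<Sum>c\<in>K. \<Sum>y\<in>E. exp (- \<beta> * H c) * metro H q \<beta> c y) / m"
      using m0 by (simp add: field_simps)
  qed
  also have "\<dots> \<le> C2 * exp (- \<beta> * S) / m"
    unfolding C2_def using flux_bound[OF b0 _ lev] EK m0 by (intro divide_right_mono) (auto simp: Int_commute)
  finally have a2b: "m * a2 \<le> C2 * exp (- \<beta> * S)" using m0 by (simp add: field_simps)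
  have cap: "qmin * exp (- \<beta> * h) \<le> k2 * (m * e)"
    unfolding k2_def m_def e_def h_def by (rule cap_lower[OF b0 uF \<omega> fF])
  have p0: "p \<ge> 0" unfolding p_def by (rule hitinf_nonneg)
  have "p * (qmin * exp (- \<beta> * h)) \<le> p * (k2 * (m * e))" by (intro mult_left_mono cap p0)
  also have "\<dots> = k2 * (m * (p * e))" by (simp add: algebra_simps)
  also have "\<dots> \<le> k2 * (m * a2)"
    unfolding k2_def by (intro mult_left_mono pe less_imp_le[OF m0]) auto
  also have "\<dots> \<le> k2 * (C2 * exp (- \<beta> * S))"
    unfolding k2_def by (intro mult_left_mono a2b) auto
  finally have main: "p * (qmin * exp (- \<beta> * h)) \<le> k2 * (C2 * exp (- \<beta> * S))" .
  have qe: "qmin * exp (- \<beta> * h) > 0" using qmin_pos by simp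
  have "p \<le> k2 * (C2 * exp (- \<beta> * S)) / (qmin * exp (- \<beta> * h))"
    using main qe by (simp add: field_simps)
  also have "\<dots> = (k2 * C2 / qmin) * (exp (- \<beta> * S) / exp (- \<beta> * h))"
    by (simp add: field_simps)
  also have "exp (- \<beta> * S) / exp (- \<beta> * h) = exp (- \<beta> * (S - h))"
    by (simp add: exp_diff[symmetric] algebra_simps)
  finally show ?thesis unfolding p_def k2_def C2_def h_def .
qed

end



lemma butlast_index: "\<omega> \<noteq> [] \<Longrightarrow> (\<forall>i. Suc i < length \<omega> \<longrightarrow> P (\<omega>!i)) \<longleftrightarrow> (\<forall>a\<in>set (butlast \<omega>). P a)"
proof
  assume h: "\<forall>i. Suc i < length \<omega> \<longrightarrow> P (\<omega>!i)"
  show "\<forall>a\<in>set (butlast \<omega>). P a" using h by (auto simp: in_set_conv_nth nth_butlast)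
next
  assume h: "\<forall>a\<in>set (butlast \<omega>). P a"
  show "\<forall>i. Suc i < length \<omega> \<longrightarrow> P (\<omega>!i)"
  proof (intro allI impI)
    fix i assume i: "Suc i < length \<omega>"
    then have "butlast \<omega> ! i = \<omega> ! i" by (simp add: nth_butlast)
    moreover have "butlast \<omega> ! i \<in> set (butlast \<omega>)" using i by (intro nth_mem) simp
    ultimately show "P (\<omega>!i)" using h by metis
  qed
qed

context landscape
begin

abbreviation "Cyc A z \<equiv> initial_cycle H q A z"

lemma Cyc_mem: "z \<in> Cyc A z" unfolding initial_cycle_def by simp

lemma Cyc_disj:
  assumes "z \<notin> A" shows "Cyc A z \<inter> A = {}"
proof -
  have "\<not> Phi z a < PhiS {z} A" if "a \<in> A" for a using PhiS_le[of z "{z}" a A] that by simp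
  then show ?thesis using assms unfolding initial_cycle_def by auto
qed

lemma Cyc_lt: "b \<in> Cyc A z \<Longrightarrow> b \<noteq> z \<Longrightarrow> Phi z b < PhiS {z} A"
  unfolding initial_cycle_def by auto

lemma Cyc_exit:
  assumes "z \<notin> A" "A \<noteq> {}"
  shows "PhiS {z} A \<le> PhiS (Cyc A z) (- Cyc A z)"
proof (rule PhiS_ge)
  show "Cyc A z \<noteq> {}" using Cyc_mem by blast
  show "- Cyc A z \<noteq> {}" using Cyc_disj[OF assms(1)] assms(2) by blast
  fix c y assume c: "c \<in> Cyc A z" and y: "y \<in> - Cyc A z"
  show "PhiS {z} A \<le> Phi c y"
  proof (rule ccontr)
    assume "\<not> PhiS {z} A \<le> Phi c y"
    then have lt: "Phi c y < PhiS {z} A" by simp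
    have "Phi z y < PhiS {z} A"
    proof (cases "c = z")
      case True then show ?thesis using lt by simp
    next
      case False
      then have "Phi z c < PhiS {z} A" using Cyc_lt c by blast
      then show ?thesis using Phi_trans[of z y c] lt by linarith
    qed
    then have "y \<in> Cyc A z" unfolding initial_cycle_def by simp
    then show False using y by simp
  qed
qed

lemma Gamma_eq: "z \<notin> A \<Longrightarrow> Gamma H q z A = PhiS (Cyc A z) (- Cyc A z) - Min (H ` Cyc A z)"
  unfolding Gamma_def depth_def by simp

lemma Cyc_min_le: "Min (H ` Cyc A z) \<le> H z"
  using Cyc_mem by (intro Min_le) auto

lemma Gamma_ge:
  assumes "z \<notin> A" "A \<noteq> {}"
  shows "PhiS {z} A - H z \<le> Gamma H q z A"
  using Gamma_eq[OF assms(1)] Cyc_exit[OF assms] Cyc_min_le[of A z] by linarith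

lemma PhiS_ge_H: "A \<noteq> {} \<Longrightarrow> H z \<le> PhiS {z} A"
  using PhiS_attained[of "{z}" A] Phi_ge_H by fastforce

lemma Gamma_nonneg: "A \<noteq> {} \<Longrightarrow> 0 \<le> Gamma H q z A"
proof (cases "z \<in> A")
  case True then show ?thesis unfolding Gamma_def by simp
next
  case False
  assume "A \<noteq> {}"
  then show ?thesis using Gamma_ge[OF False] PhiS_ge_H[of A z] by linarith
qed

lemma Cyc_lev:
  assumes "c \<in> Cyc A z" "y \<in> - Cyc A z" "q c y > 0"
  shows "PhiS (Cyc A z) (- Cyc A z) \<le> max (H c) (H y)"
  using PhiS_le[OF assms(1,2)] Phi_edge[OF assms(3)] by linarith

lemma Gamma_finite: "finite ((\<lambda>z. Gamma H q z A) ` S)"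
  by (rule finite_subset[of _ "range (\<lambda>z. Gamma H q z A)"]) auto

lemma opt_vals_finite: "finite ((\<lambda>\<omega>. Max ((\<lambda>z. Gamma H q z A) ` set \<omega>)) ` opt_paths H q x A)"
proof (rule finite_subset[of _ "Max ` Pow (range (\<lambda>z. Gamma H q z A))"])
  show "(\<lambda>\<omega>. Max ((\<lambda>z. Gamma H q z A) ` set \<omega>)) ` opt_paths H q x A \<subseteq> Max ` Pow (range (\<lambda>z. Gamma H q z A))"
    by auto
qed simp

lemma Psi_min_le: "\<omega> \<in> opt_paths H q x A \<Longrightarrow> Psi_min H q x A \<le> Max ((\<lambda>z. Gamma H q z A) ` set \<omega>)"
  unfolding Psi_min_def by (rule Min_le[OF opt_vals_finite]) auto

lemma Psi_max_ge: "\<omega> \<in> opt_paths H q x A \<Longrightarrow> Max ((\<lambda>z. Gamma H q z A) ` set \<omega>) \<le> Psi_max H q x A"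
  unfolding Psi_max_def by (rule Max_ge[OF opt_vals_finite]) auto

lemma Gamma_le_Psi_max:
  assumes "\<omega> \<in> opt_paths H q x A" "w \<in> set \<omega>"
  shows "Gamma H q w A \<le> Psi_max H q x A"
proof -
  have "Gamma H q w A \<le> Max ((\<lambda>z. Gamma H q z A) ` set \<omega>)"
    using assms(2) by (intro Max_ge Gamma_finite) auto
  then show ?thesis using Psi_max_ge[OF assms(1)] by linarith
qed

end



locale setting = landscape +
  fixes A :: "'a set" and x :: 'a
  assumes A_ne: "A \<noteq> {}" and x_notin: "x \<notin> A"
begin

definition "Phis = PhiS {x} A"
definition "R = {y. y \<notin> A \<and> (\<exists>\<omega>. path_from_to q \<omega> x y \<and> set \<omega> \<inter> A = {} \<and> path_height H \<omega> \<le> Phis)}"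
definition "Alow = {a \<in> A. H a \<le> Phis}"
definition "Eset = -(R \<union> Alow)"
definition "delta0 = Min (insert 1 {H y - Phis | y. Phis < H y})"

lemma path_ne: "path_from_to q \<omega> a b \<Longrightarrow> \<omega> \<noteq> []"
  unfolding path_from_to_def is_path_def by auto

lemma R_x: "x \<in> R"
proof -
  have "path_from_to q [x] x x" unfolding path_from_to_def by simp
  moreover have "H x \<le> Phis" unfolding Phis_def by (rule PhiS_ge_H[OF A_ne])
  ultimately show ?thesis unfolding R_def using x_notin by (intro CollectI conjI exI[of _ "[x]"]) auto
qed

lemma R_H: "y \<in> R \<Longrightarrow> H y \<le> Phis"
proof -
  assume "y \<in> R"
  then obtain \<omega> where \<omega>: "path_from_to q \<omega> x y" "path_height H \<omega> \<le> Phis" unfolding R_def by auto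
  have "y \<in> set \<omega>" using \<omega> path_ne unfolding path_from_to_def by (metis last_in_set)
  then show ?thesis using path_height_ge[of y \<omega> H] \<omega> by linarith
qed

lemma R_A: "R \<inter> A = {}" unfolding R_def by auto

lemma delta0_fin: "finite (insert 1 {H y - Phis | y. Phis < H y})"
proof -
  have "{H y - Phis | y. Phis < H y} \<subseteq> (\<lambda>y. H y - Phis) ` UNIV" by auto
  then show ?thesis by (simp add: finite_subset)
qed

lemma delta0_pos: "delta0 > 0"
  unfolding delta0_def using delta0_fin by (subst Min_gr_iff) auto

lemma delta0_le: "Phis < H y \<Longrightarrow> Phis + delta0 \<le> H y"
proof -
  assume "Phis < H y"
  then have "delta0 \<le> H y - Phis" unfolding delta0_def by (intro Min_le delta0_fin) auto
  then show ?thesis by simp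
qed

lemma Eset_lev:
  assumes c: "c \<in> R" and y: "y \<in> Eset" and qp: "q c y > 0"
  shows "Phis + delta0 \<le> max (H c) (H y)"
proof (cases "Phis < H y")
  case True
  then show ?thesis using delta0_le[of y] by (simp add: max.coboundedI2)
next
  case False
  then have Hy: "H y \<le> Phis" by simp
  show ?thesis
  proof (cases "y \<in> A")
    case True
    then have "y \<in> Alow" using Hy unfolding Alow_def by simp
    then show ?thesis using y unfolding Eset_def by simp
  next
    case nA: False
    obtain \<omega> where \<omega>: "path_from_to q \<omega> x c" "set \<omega> \<inter> A = {}" "path_height H \<omega> \<le> Phis"
      using c unfolding R_def by auto
    have ne: "\<omega> \<noteq> []" using \<omega> path_ne by blast
    have "is_path q (\<omega> @ [y])"
    proof (rule is_path_append)
      show "is_path q \<omega>" using \<omega>(1) unfolding path_from_to_def by blast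
      show "is_path q [y]" by simp
      show "q (last \<omega>) (hd [y]) > 0" using \<omega>(1) qp unfolding path_from_to_def by simp
    qed
    then have p: "path_from_to q (\<omega> @ [y]) x y" using \<omega> ne unfolding path_from_to_def by simp
    have "path_height H (\<omega> @ [y]) \<le> Phis"
    proof (rule path_height_le)
      show "\<omega> @ [y] \<noteq> []" by simp
      fix b assume "b \<in> set (\<omega> @ [y])"
      then have "b \<in> set \<omega> \<or> b = y" by auto
      then show "H b \<le> Phis"
      proof
        assume "b \<in> set \<omega>"
        then show ?thesis using path_height_ge[of b \<omega> H] \<omega>(3) by linarith
      qed (use Hy in simp)
    qed
    moreover have "set (\<omega> @ [y]) \<inter> A = {}" using \<omega>(2) nA by auto
    ultimately have "y \<in> R" unfolding R_def using p nA by (intro CollectI conjI exI[of _ "\<omega> @ [y]"]) simp_all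
    then show ?thesis using y unfolding Eset_def by simp
  qed
qed

lemma Alow_path: "\<exists>\<omega> a. path_from_to q \<omega> x a \<and> a \<in> Alow \<and> path_height H \<omega> = Phis"
proof -
  obtain a where a: "a \<in> A" "Phis = Phi x a" using PhiS_attained[of "{x}" A] A_ne unfolding Phis_def by auto
  obtain \<omega> where \<omega>: "path_from_to q \<omega> x a" "path_height H \<omega> = Phi x a" using Phi_attained by blast
  have "a \<in> Alow" using a Phi_ge_H(2)[where a=x and b=a] unfolding Alow_def by simp
  then show ?thesis using \<omega> a by auto
qed

lemma first_hit_height: "\<omega> \<in> first_hit_paths q x A \<Longrightarrow> Phis \<le> path_height H \<omega>"
proof -
  assume "\<omega> \<in> first_hit_paths q x A"
  then have "path_from_to q \<omega> x (last \<omega>)" "last \<omega> \<in> A" unfolding first_hit_paths_def path_from_to_def by auto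
  then show ?thesis unfolding Phis_def using PhiS_le[of x "{x}" "last \<omega>" A] Phi_le by fastforce
qed

lemma opt_first: "\<exists>\<omega>. \<omega> \<in> first_hit_paths q x A \<and> path_height H \<omega> = Phis"
proof -
  obtain \<omega> a where \<omega>: "path_from_to q \<omega> x a" "a \<in> Alow" "path_height H \<omega> = Phis" using Alow_path by blast
  have ne: "\<omega> \<noteq> []" using \<omega> path_ne by blast
  have ex: "\<exists>j. j < length \<omega> \<and> \<omega>!j \<in> A"
    using \<omega> ne unfolding path_from_to_def Alow_def by (intro exI[of _ "length \<omega> - 1"]) (auto simp: last_conv_nth)
  define j where "j = (LEAST j. j < length \<omega> \<and> \<omega>!j \<in> A)"
  have j: "j < length \<omega>" "\<omega>!j \<in> A" using LeastI_ex[OF ex] unfolding j_def by auto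
  have jmin: "\<omega>!i \<notin> A" if "i < j" for i
    using not_less_Least[of i "\<lambda>j. j < length \<omega> \<and> \<omega>!j \<in> A"] that j unfolding j_def[symmetric] by auto
  define \<omega>' where "\<omega>' = take (Suc j) \<omega>"
  have len: "length \<omega>' = Suc j" unfolding \<omega>'_def using j by simp
  have fh: "\<omega>' \<in> first_hit_paths q x A"
    unfolding first_hit_paths_def
  proof (intro CollectI conjI allI impI)
    show "is_path q \<omega>'" unfolding \<omega>'_def using \<omega> by (intro is_path_take) (auto simp: path_from_to_def)
    show "hd \<omega>' = x" unfolding \<omega>'_def using \<omega> ne by (simp add: path_from_to_def hd_take)
    show "last \<omega>' \<in> A" unfolding \<omega>'_def using j by (simp add: take_Suc_conv_app_nth)
    fix i assume "Suc i < length \<omega>'"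
    then have "i < j" using len by simp
    then show "\<omega>'!i \<notin> A" unfolding \<omega>'_def using jmin by simp
  qed
  have "path_height H \<omega>' \<le> Phis"
  proof (rule path_height_le)
    show "\<omega>' \<noteq> []" using len by auto
    fix b assume "b \<in> set \<omega>'"
    then have "b \<in> set \<omega>" unfolding \<omega>'_def by (meson in_set_takeD)
    then show "H b \<le> Phis" using path_height_ge \<omega>(3) by metis
  qed
  then show ?thesis using fh first_hit_height[OF fh] by (intro exI[of _ \<omega>']) auto
qed

lemma R_on_opt: "w \<in> R \<Longrightarrow> \<exists>\<omega>\<in>opt_paths H q x A. w \<in> set \<omega>"
proof -
  assume "w \<in> R"
  then obtain \<omega>1 where \<omega>1: "path_from_to q \<omega>1 x w" "set \<omega>1 \<inter> A = {}" "path_height H \<omega>1 \<le> Phis"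
    unfolding R_def by auto
  obtain \<omega>2 where \<omega>2: "\<omega>2 \<in> first_hit_paths q x A" "path_height H \<omega>2 = Phis" using opt_first by blast
  have p2: "path_from_to q \<omega>2 x (last \<omega>2)" using \<omega>2 unfolding first_hit_paths_def path_from_to_def by auto
  have ne2: "\<omega>2 \<noteq> []" using p2 path_ne by blast
  have bl2: "\<forall>a\<in>set (butlast \<omega>2). a \<notin> A"
    using butlast_index[OF ne2, of "\<lambda>a. a \<notin> A"] \<omega>2 unfolding first_hit_paths_def by auto
  obtain \<omega>3 where \<omega>3: "path_from_to q \<omega>3 x x" "path_height H \<omega>3 \<le> max (path_height H \<omega>1) (path_height H (rev \<omega>1))"
    "set \<omega>3 \<subseteq> set \<omega>1 \<union> set (rev \<omega>1)" "\<omega>3 = \<omega>1 @ tl (rev \<omega>1)"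
    using path_join_ft[OF \<omega>1(1) conjunct1[OF path_rev_ft[OF \<omega>1(1)]]] by blast
  have h3: "path_height H \<omega>3 \<le> Phis" using \<omega>3(2) \<omega>1(3) path_rev_ft[OF \<omega>1(1)] by simp
  have s3: "set \<omega>3 \<inter> A = {}" using \<omega>3(3) \<omega>1(2) by auto
  define \<omega> where "\<omega> = \<omega>3 @ tl \<omega>2"
  have j: "path_from_to q \<omega> x (last \<omega>2)" "path_height H \<omega> \<le> max (path_height H \<omega>3) (path_height H \<omega>2)"
    using path_join_ft[OF \<omega>3(1) p2] unfolding \<omega>_def by auto
  have tl2: "tl \<omega>2 \<noteq> []"
  proof
    assume "tl \<omega>2 = []"
    then have "\<omega>2 = [x]" using ne2 p2 unfolding path_from_to_def by (metis list.collapse)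
    then show False using \<omega>2 x_notin unfolding first_hit_paths_def by simp
  qed
  have "butlast \<omega> = \<omega>3 @ butlast (tl \<omega>2)" unfolding \<omega>_def using tl2 by (simp add: butlast_append)
  moreover have "set (butlast (tl \<omega>2)) \<subseteq> set (butlast \<omega>2)"
    by (metis butlast_tl list.set_sel(2) subsetI tl_Nil)
  ultimately have bl: "\<forall>a\<in>set (butlast \<omega>). a \<notin> A" using s3 bl2 by auto
  have ne: "\<omega> \<noteq> []" using j path_ne by blast
  have fh: "\<omega> \<in> first_hit_paths q x A"
    unfolding first_hit_paths_def
    using j ne \<omega>2 butlast_index[OF ne, of "\<lambda>a. a \<notin> A"] bl
    unfolding path_from_to_def first_hit_paths_def by auto
  have "path_height H \<omega> \<le> Phis" using j(2) h3 \<omega>2(2) by simp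
  then have "path_height H \<omega> = Phis" using first_hit_height[OF fh] by simp
  then have "\<omega> \<in> opt_paths H q x A" using fh unfolding opt_paths_def Phis_def by simp
  moreover have "w \<in> set \<omega>"
  proof -
    have "w \<in> set \<omega>1" using \<omega>1(1) path_ne unfolding path_from_to_def by (metis last_in_set)
    then show ?thesis unfolding \<omega>_def \<omega>3(4) by simp
  qed
  ultimately show ?thesis by blast
qed

lemma Gamma_R: "w \<in> R \<Longrightarrow> Gamma H q w A \<le> Psi_max H q x A"
  using R_on_opt Gamma_le_Psi_max by blast

end



context setting
begin

lemma metro_pos_q: "y \<noteq> w \<Longrightarrow> metro H q \<beta> y w \<noteq> 0 \<Longrightarrow> q y w > 0"
  using metro_offdiag[of y w \<beta>] q_nonneg[of y w] by (cases "q y w = 0") auto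

definition "Reach W y = (\<exists>\<omega>. is_path q \<omega> \<and> hd \<omega> = y \<and> last \<omega> \<in> Alow \<and> set (butlast \<omega>) \<subseteq> W)"

lemma no_reach_hit:
  assumes WR: "W \<subseteq> R" and MW: "M \<inter> W = {}" and RMW: "R - M \<subseteq> W"
  shows "y \<in> W \<Longrightarrow> \<not> Reach W y \<Longrightarrow> hit (metro H q \<beta>) Alow (Eset \<union> M) n y = 0"
proof (induction n arbitrary: y)
  case 0
  then show ?case by simp
next
  case (Suc n)
  have yR: "y \<in> R" using Suc.prems WR by auto
  have term0: "metro H q \<beta> y w * (if w \<in> Alow then 1 else if w \<in> Eset \<union> M then 0 else hit (metro H q \<beta>) Alow (Eset \<union> M) n w) = 0" for w
  proof (cases "metro H q \<beta> y w = 0")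
    case True then show ?thesis by simp
  next
    case False
    show ?thesis
    proof (cases "w = y")
      case True
      have "y \<notin> Alow" using yR R_A unfolding Alow_def by auto
      moreover have "y \<notin> Eset" using yR unfolding Eset_def by auto
      moreover have "y \<notin> M" using Suc.prems MW by auto
      ultimately show ?thesis using True Suc.IH[OF Suc.prems] by simp
    next
      case wy: False
      have qp: "q y w > 0" using metro_pos_q[of y w \<beta>] wy False by auto
      show ?thesis
      proof (cases "w \<in> Alow")
        case True
        have "is_path q [y, w]" using qp by (simp add: is_path_Cons2)
        then have "Reach W y" unfolding Reach_def using True Suc.prems
          by (intro exI[of _ "[y, w]"]) auto
        then show ?thesis using Suc.prems by simp
      next
        case nA: False
        show ?thesis
        proof (cases "w \<in> Eset \<union> M")
          case True then show ?thesis using nA by simp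
        next
          case False
          then have wW: "w \<in> W" using nA RMW unfolding Eset_def by auto
          have "\<not> Reach W w"
          proof
            assume "Reach W w"
            then obtain \<omega> where \<omega>: "is_path q \<omega>" "hd \<omega> = w" "last \<omega> \<in> Alow" "set (butlast \<omega>) \<subseteq> W"
              unfolding Reach_def by blast
            have ne: "\<omega> \<noteq> []" using \<omega> is_path_def by blast
            have "is_path q (y # \<omega>)" using \<omega> qp ne by (simp add: is_path_Cons)
            moreover have "set (butlast (y # \<omega>)) \<subseteq> W" using \<omega>(4) ne Suc.prems(1) by auto
            ultimately have "Reach W y" unfolding Reach_def using \<omega> ne by (intro exI[of _ "y # \<omega>"]) auto
            then show False using Suc.prems by simp
          qed
          then show ?thesis using Suc.IH[OF wW] nA False by simp
        qed
      qed
    qed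
  qed
  show ?case unfolding hit.simps by (rule sum.neutral) (use term0 in blast)
qed

lemma not_reach_x:
  assumes Wdef: "W = R - M" and Mdef: "M = {z \<in> R. Psi_min H q x A \<le> Gamma H q z A}"
    and Ppos: "Psi_min H q x A > 0" and xW: "x \<in> W"
  shows "\<not> Reach W x"
proof
  assume "Reach W x"
  then obtain \<omega> where \<omega>: "is_path q \<omega>" "hd \<omega> = x" "last \<omega> \<in> Alow" "set (butlast \<omega>) \<subseteq> W"
    unfolding Reach_def by blast
  have ne: "\<omega> \<noteq> []" using \<omega> is_path_def by blast
  have setw: "set \<omega> = set (butlast \<omega>) \<union> {last \<omega>}"
  proof -
    have "\<omega> = butlast \<omega> @ [last \<omega>]" using ne by simp
    then have "set \<omega> = set (butlast \<omega> @ [last \<omega>])" by simp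
    then show ?thesis by simp
  qed
  have bA: "a \<notin> A" if "a \<in> set (butlast \<omega>)" for a using that \<omega>(4) Wdef R_A by auto
  have lA: "last \<omega> \<in> A" using \<omega>(3) unfolding Alow_def by simp
  have "\<forall>i. Suc i < length \<omega> \<longrightarrow> \<omega>!i \<notin> A"
    using butlast_index[OF ne, of "\<lambda>a. a \<notin> A"] bA by blast
  then have fh: "\<omega> \<in> first_hit_paths q x A"
    unfolding first_hit_paths_def using \<omega>(1,2) lA by blast
  have "path_height H \<omega> \<le> Phis"
  proof (rule path_height_le[OF ne])
    fix a assume "a \<in> set \<omega>"
    then have "a \<in> set (butlast \<omega>) \<or> a = last \<omega>" using setw by auto
    then show "H a \<le> Phis"
    proof
      assume "a \<in> set (butlast \<omega>)"
      then have "a \<in> R" using \<omega>(4) Wdef by auto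
      then show ?thesis by (rule R_H)
    next
      assume "a = last \<omega>"
      then show ?thesis using \<omega>(3) unfolding Alow_def by simp
    qed
  qed
  then have "\<omega> \<in> opt_paths H q x A"
    using fh first_hit_height[OF fh] unfolding opt_paths_def Phis_def by simp
  then have le: "Psi_min H q x A \<le> Max ((\<lambda>z. Gamma H q z A) ` set \<omega>)" by (rule Psi_min_le)
  have "Max ((\<lambda>z. Gamma H q z A) ` set \<omega>) \<in> (\<lambda>z. Gamma H q z A) ` set \<omega>"
    using ne by (intro Max_in) auto
  then obtain a where a: "a \<in> set \<omega>" "Max ((\<lambda>z. Gamma H q z A) ` set \<omega>) = Gamma H q a A" by auto
  have "Gamma H q a A < Psi_min H q x A"
  proof -
    have "a \<in> set (butlast \<omega>) \<or> a = last \<omega>" using a setw by auto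
    then show ?thesis
    proof
      assume "a \<in> set (butlast \<omega>)"
      then have "a \<in> W" using \<omega>(4) by auto
      then show ?thesis using Wdef Mdef by auto
    next
      assume "a = last \<omega>"
      then have "a \<in> A" using \<omega>(3) unfolding Alow_def by auto
      then show ?thesis using Ppos unfolding Gamma_def by simp
    qed
  qed
  then show False using le a by simp
qed

end



context setting
begin


lemma T2_bound: "\<exists>K. \<forall>\<beta>\<ge>0. hitinf (metro H q \<beta>) Eset Alow x \<le> K * exp (- \<beta> * delta0)"
proof -
  obtain \<omega> a where \<omega>: "path_from_to q \<omega> x a" "a \<in> Alow" "path_height H \<omega> = Phis" using Alow_path by blast
  define K where "K = 2 * (real (length \<omega> - 1))^2 * (real (card (UNIV :: 'a set)))^2 / qmin"
  have "hitinf (metro H q \<beta>) Eset Alow x \<le> K * exp (- \<beta> * delta0)" if b0: "\<beta> \<ge> 0" for \<beta>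
  proof -
    have "hitinf (metro H q \<beta>) Eset Alow x \<le> K * exp (- \<beta> * (Phis + delta0 - path_height H \<omega>))"
      unfolding K_def
    proof (rule ratio_bound[OF b0 R_x])
      show "Eset \<inter> R = {}" unfolding Eset_def by auto
      show "- R - Eset \<subseteq> Alow" unfolding Eset_def by auto
      show "x \<notin> Alow" using x_notin unfolding Alow_def by auto
      show "Eset \<inter> Alow = {}" unfolding Eset_def by auto
      show "\<And>c y. c \<in> R \<Longrightarrow> y \<in> Eset \<Longrightarrow> 0 < q c y \<Longrightarrow> Phis + delta0 \<le> max (H c) (H y)"
        by (rule Eset_lev)
    qed (use \<omega> in auto)
    then show ?thesis using \<omega>(3) by simp
  qed
  then show ?thesis by blast
qed

lemma cyc_bound:
  assumes zR: "z \<in> R"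
  shows "\<exists>K d. d > 0 \<and> (\<forall>\<beta>\<ge>0. \<forall>n. hit (metro H q \<beta>) (- Cyc A z) {} n z
              \<le> K * exp (- \<beta> * d) + real n * (real (card (UNIV :: 'a set)))^2 * exp (- \<beta> * Gamma H q z A))"
proof -
  have zA: "z \<notin> A" using zR R_A by auto
  define C where "C = Cyc A z"
  define S where "S = PhiS C (- C)"
  have zC: "z \<in> C" unfolding C_def by (rule Cyc_mem)
  have Cne: "C \<noteq> {}" using zC by blast
  obtain b where b: "b \<in> C" "H b = Min (H ` C)"
  proof -
    have "Min (H ` C) \<in> H ` C" using Cne by (intro Min_in) auto
    then show ?thesis using that by auto
  qed
  have Gam: "Gamma H q z A = S - H b" unfolding S_def C_def using Gamma_eq[OF zA] b unfolding C_def by simp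
  have lev: "\<And>c y. c \<in> C \<Longrightarrow> y \<in> - C \<Longrightarrow> 0 < q c y \<Longrightarrow> S \<le> max (H c) (H y)"
    unfolding S_def C_def by (rule Cyc_lev)
  have KB: "hit (metro H q \<beta>) (- C) {} n b \<le> real n * (real (card (UNIV :: 'a set)))^2 * exp (- \<beta> * Gamma H q z A)" if b0: "\<beta> \<ge> 0" for \<beta> n
  proof -
    interpret revchain "metro H q \<beta>" "\<lambda>y. exp (- \<beta> * H y)" using metro_revchain[OF b0] .
    have "exp (- \<beta> * H b) * hit (metro H q \<beta>) (- C) {} n b \<le> real n * (\<Sum>c\<in>C. \<Sum>y\<in>- C. exp (- \<beta> * H c) * metro H q \<beta> c y)"
      by (rule lemmaK[OF b(1)])
    also have "\<dots> \<le> real n * ((real (card (UNIV :: 'a set)))^2 * exp (- \<beta> * S))"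
      by (intro mult_left_mono flux_bound[OF b0 _ lev]) auto
    finally have "hit (metro H q \<beta>) (- C) {} n b \<le> real n * (real (card (UNIV :: 'a set)))^2 * (exp (- \<beta> * S) / exp (- \<beta> * H b))"
      by (simp add: field_simps)
    also have "exp (- \<beta> * S) / exp (- \<beta> * H b) = exp (- \<beta> * Gamma H q z A)"
      unfolding Gam by (simp add: exp_diff[symmetric] algebra_simps)
    finally show ?thesis by simp
  qed
  show ?thesis
  proof (cases "b = z")
    case True
    show ?thesis
      by (rule exI[of _ 0], rule exI[of _ 1]) (use KB True in \<open>auto simp: C_def\<close>)
  next
    case False
    obtain \<omega> where \<omega>: "path_from_to q \<omega> z b" "path_height H \<omega> = Phi z b" using Phi_attained by blast
    define K where "K = 2 * (real (length \<omega> - 1))^2 * (real (card (UNIV :: 'a set)))^2 / qmin"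
    have dpos: "S - Phi z b > 0"
      using Cyc_lt[of b A z] b(1) False Cyc_exit[OF zA A_ne] unfolding S_def C_def by simp
    have "hit (metro H q \<beta>) (- C) {} n z \<le> K * exp (- \<beta> * (S - Phi z b)) + real n * (real (card (UNIV :: 'a set)))^2 * exp (- \<beta> * Gamma H q z A)"
      if b0: "\<beta> \<ge> 0" for \<beta> n
    proof -
      interpret revchain "metro H q \<beta>" "\<lambda>y. exp (- \<beta> * H y)" using metro_revchain[OF b0] .
      have "hit (metro H q \<beta>) (- C) {} n z \<le> hit (metro H q \<beta>) (- C) ({} \<union> {b}) n z +
         (\<Sum>g\<in>{b}. hit (metro H q \<beta>) {g} (- C \<union> {} \<union> ({b} - {g})) n z * hit (metro H q \<beta>) (- C) {} n g)"
        by (rule hit_fhd)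
      also have "\<dots> = hit (metro H q \<beta>) (- C) {b} n z + hit (metro H q \<beta>) {b} (- C) n z * hit (metro H q \<beta>) (- C) {} n b"
        by simp
      also have "\<dots> \<le> hitinf (metro H q \<beta>) (- C) {b} z + 1 * hit (metro H q \<beta>) (- C) {} n b"
        by (intro add_mono mult_right_mono hit_le_hitinf hit_le_1 hit_nonneg)
      also have "hitinf (metro H q \<beta>) (- C) {b} z \<le> K * exp (- \<beta> * (S - path_height H \<omega>))"
        unfolding K_def
      proof (rule ratio_bound[OF b0 zC])
        show "- C \<inter> C = {}" by auto
        show "- C - - C \<subseteq> {b}" by auto
        show "z \<notin> {b}" using False by auto
        show "- C \<inter> {b} = {}" using b by auto
      qed (use lev \<omega> in auto)
      finally show ?thesis using KB[OF b0, of n] \<omega>(2) by simp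
    qed
    then show ?thesis using dpos unfolding C_def by blast
  qed
qed

lemma green_part: "\<exists>K3. \<forall>\<beta>\<ge>0. \<forall>n. real n * (1 - hit (metro H q \<beta>) (- R) {} n x) \<le> K3 * exp (\<beta> * Psi_max H q x A)"
proof -
  have "\<forall>w. \<exists>\<omega> a. path_from_to q \<omega> w a \<and> a \<in> A \<and> path_height H \<omega> = PhiS {w} A"
  proof
    fix w
    obtain a where a: "a \<in> A" "PhiS {w} A = Phi w a" using PhiS_attained[of "{w}" A] A_ne by auto
    obtain \<omega> where "path_from_to q \<omega> w a" "path_height H \<omega> = Phi w a" using Phi_attained by blast
    then show "\<exists>\<omega> a. path_from_to q \<omega> w a \<and> a \<in> A \<and> path_height H \<omega> = PhiS {w} A" using a by metis
  qed
  then obtain pw aw where pw: "\<And>w. path_from_to q (pw w) w (aw w) \<and> aw w \<in> A \<and> path_height H (pw w) = PhiS {w} A"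
    by metis
  define kw where "kw w = 2 * (real (length (pw w) - 1))^2 / qmin" for w
  define K3 where "K3 = (\<Sum>w\<in>R. kw w)"
  have "real n * (1 - hit (metro H q \<beta>) (- R) {} n x) \<le> K3 * exp (\<beta> * Psi_max H q x A)" if b0: "\<beta> \<ge> 0" for \<beta> n
  proof -
    interpret revchain "metro H q \<beta>" "\<lambda>y. exp (- \<beta> * H y)" using metro_revchain[OF b0] .
    have capw: "qmin * exp (- \<beta> * path_height H (pw w)) \<le> 2 * (real (length (pw w) - 1))^2 * (exp (- \<beta> * H w) * hitinf (metro H q \<beta>) (- R) {w} w)"
      if "w \<in> R" for w
      by (rule cap_lower[OF b0]) (use that pw[of w] R_A in auto)
    have pos: "hitinf (metro H q \<beta>) (- R) {w} w > 0" if "w \<notin> - R" for w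
    proof -
      have "0 < qmin * exp (- \<beta> * path_height H (pw w))" using qmin_pos by simp
      also have "\<dots> \<le> 2 * (real (length (pw w) - 1))^2 * (exp (- \<beta> * H w) * hitinf (metro H q \<beta>) (- R) {w} w)"
        using capw that by simp
      finally show ?thesis using hitinf_nonneg[of "- R" "{w}" w]
        by (simp add: zero_less_mult_iff)
    qed
    have inv: "1 / hitinf (metro H q \<beta>) (- R) {w} w \<le> kw w * exp (\<beta> * Psi_max H q x A)" if wR: "w \<in> R" for w
    proof -
      define e where "e = hitinf (metro H q \<beta>) (- R) {w} w"
      have e0: "e > 0" unfolding e_def using pos wR by simp
      have c: "qmin * exp (- \<beta> * PhiS {w} A) \<le> 2 * (real (length (pw w) - 1))^2 * (exp (- \<beta> * H w) * e)"
        using capw[OF wR] pw[of w] unfolding e_def by simp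
      have "1 / e \<le> 2 * (real (length (pw w) - 1))^2 * exp (- \<beta> * H w) / (qmin * exp (- \<beta> * PhiS {w} A))"
        using c e0 qmin_pos by (simp add: field_simps)
      also have "\<dots> = kw w * exp (\<beta> * (PhiS {w} A - H w))"
      proof -
        have ex: "exp (- \<beta> * H w) = exp (\<beta> * (PhiS {w} A - H w)) * exp (- \<beta> * PhiS {w} A)"
          by (simp add: exp_add[symmetric] algebra_simps)
        show ?thesis unfolding kw_def ex using qmin_pos by (simp add: field_simps)
      qed
      also have "\<dots> \<le> kw w * exp (\<beta> * Psi_max H q x A)"
      proof (intro mult_left_mono)
        have "PhiS {w} A - H w \<le> Psi_max H q x A"
        proof -
          have "w \<notin> A" using wR R_A by auto
          then show ?thesis using Gamma_ge[of w A] A_ne Gamma_R[OF wR] by linarith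
        qed
        then show "exp (\<beta> * (PhiS {w} A - H w)) \<le> exp (\<beta> * Psi_max H q x A)"
          using b0 by (simp add: mult_left_mono)
        show "0 \<le> kw w" unfolding kw_def using qmin_pos by simp
      qed
      finally show ?thesis unfolding e_def .
    qed
    have "real n * (1 - hit (metro H q \<beta>) (- R) {} n x) \<le> (\<Sum>w\<in>- (- R). 1 / hitinf (metro H q \<beta>) (- R) {w} w)"
      by (rule green_bound) (use R_x pos in auto)
    also have "\<dots> \<le> (\<Sum>w\<in>R. kw w * exp (\<beta> * Psi_max H q x A))"
      using inv by (simp add: sum_mono)
    also have "\<dots> = K3 * exp (\<beta> * Psi_max H q x A)" unfolding K3_def by (simp add: sum_distrib_right)
    finally show ?thesis .
  qed
  then show ?thesis by blast
qed

end



lemma exp_eventually: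
  fixes K d :: real
  assumes "d > 0"
  shows "\<forall>\<^sub>F \<beta> in at_top. K * exp (- \<beta> * d) < exp (- (d / 2) * \<beta>)"
proof -
  have "\<forall>\<^sub>F \<beta> in at_top. (2 * ln (\<bar>K\<bar> + 1) / d) < (\<beta>::real)" by (rule eventually_gt_at_top)
  then show ?thesis
  proof (rule eventually_mono)
    fix \<beta> :: real assume b: "2 * ln (\<bar>K\<bar> + 1) / d < \<beta>"
    then have "ln (\<bar>K\<bar> + 1) < \<beta> * d / 2" using assms by (simp add: field_simps)
    then have "\<bar>K\<bar> + 1 < exp (\<beta> * d / 2)" by (metis abs_ge_zero add_pos_nonneg exp_less_cancel_iff exp_ln zero_less_one add.commute)
    then have Kl: "K < exp (\<beta> * d / 2)" by linarith
    have "K * exp (- \<beta> * d) = K * exp (- (d / 2) * \<beta>) * exp (- (d / 2) * \<beta>)"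
      by (simp add: exp_add[symmetric] algebra_simps)
    also have "\<dots> < exp (\<beta> * d / 2) * exp (- (d / 2) * \<beta>) * exp (- (d / 2) * \<beta>)"
      using Kl by (intro mult_strict_right_mono) auto
    also have "\<dots> = exp (- (d / 2) * \<beta>)" by (simp add: exp_add[symmetric] algebra_simps)
    finally show "K * exp (- \<beta> * d) < exp (- (d / 2) * \<beta>)" .
  qed
qed

context setting
begin

lemma x_notR_M: "x \<in> R" by (rule R_x)

lemma lower_main:
  assumes eps: "\<epsilon> > 0"
  shows "\<exists>\<kappa>>0. \<forall>\<^sub>F \<beta> in at_top. prob_hit_before H q \<beta> A x (exp (\<beta> * (Psi_min H q x A - \<epsilon>))) < exp (- \<kappa> * \<beta>)"
proof (cases "Psi_min H q x A \<le> \<epsilon>")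
  case True
  have "\<forall>\<^sub>F \<beta> in at_top. (0::real) \<le> \<beta>" by (rule eventually_ge_at_top)
  then have "\<forall>\<^sub>F \<beta> in at_top. prob_hit_before H q \<beta> A x (exp (\<beta> * (Psi_min H q x A - \<epsilon>))) < exp (- 1 * \<beta>)"
  proof (rule eventually_mono)
    fix \<beta> :: real assume b0: "0 \<le> \<beta>"
    have "\<beta> * (Psi_min H q x A - \<epsilon>) \<le> 0" using b0 True by (simp add: mult_nonneg_nonpos)
    then have "exp (\<beta> * (Psi_min H q x A - \<epsilon>)) \<le> 1" by simp
    then have "\<lceil>exp (\<beta> * (Psi_min H q x A - \<epsilon>))\<rceil> \<le> 1" by (simp add: ceiling_le_iff)
    then have "nat (\<lceil>exp (\<beta> * (Psi_min H q x A - \<epsilon>))\<rceil> - 1) = 0" by simp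
    then show "prob_hit_before H q \<beta> A x (exp (\<beta> * (Psi_min H q x A - \<epsilon>))) < exp (- 1 * \<beta>)"
      unfolding prob_hit_before_def by simp
  qed
  then show ?thesis by (intro exI[of _ 1]) auto
next
  case False
  define Psi where "Psi = Psi_min H q x A"
  have Pe: "\<epsilon> < Psi" using False unfolding Psi_def by simp
  define M where "M = {z \<in> R. Psi \<le> Gamma H q z A}"
  have MR: "M \<subseteq> R" unfolding M_def by auto
  obtain K1 where K1: "\<forall>\<beta>\<ge>0. hitinf (metro H q \<beta>) Eset Alow x \<le> K1 * exp (- \<beta> * delta0)"
    using T2_bound by blast
  have "\<forall>z\<in>R. \<exists>p. snd p > 0 \<and> (\<forall>\<beta>\<ge>0. \<forall>n. hit (metro H q \<beta>) (- Cyc A z) {} n z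
              \<le> fst p * exp (- \<beta> * snd p) + real n * (real (card (UNIV :: 'a set)))^2 * exp (- \<beta> * Gamma H q z A))"
  proof
    fix z assume "z \<in> R"
    from cyc_bound[OF this] obtain K d where "d > 0 \<and> (\<forall>\<beta>\<ge>0. \<forall>n. hit (metro H q \<beta>) (- Cyc A z) {} n z
              \<le> K * exp (- \<beta> * d) + real n * (real (card (UNIV :: 'a set)))^2 * exp (- \<beta> * Gamma H q z A))" by blast
    then show "\<exists>p. snd p > 0 \<and> (\<forall>\<beta>\<ge>0. \<forall>n. hit (metro H q \<beta>) (- Cyc A z) {} n z
              \<le> fst p * exp (- \<beta> * snd p) + real n * (real (card (UNIV :: 'a set)))^2 * exp (- \<beta> * Gamma H q z A))"
      by (intro exI[of _ "(K, d)"]) simp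
  qed
  then obtain f where f: "\<And>z. z \<in> R \<Longrightarrow> snd (f z) > 0 \<and> (\<forall>\<beta>\<ge>0. \<forall>n. hit (metro H q \<beta>) (- Cyc A z) {} n z
              \<le> fst (f z) * exp (- \<beta> * snd (f z)) + real n * (real (card (UNIV :: 'a set)))^2 * exp (- \<beta> * Gamma H q z A))"
    using bchoice[of R] by metis
  define ds where "ds = Min (insert delta0 (insert \<epsilon> ((\<lambda>z. snd (f z)) ` M)))"
  have ds_pos: "ds > 0" unfolding ds_def using delta0_pos eps f MR by (subst Min_gr_iff) auto
  have ds_le: "ds \<le> delta0" "ds \<le> \<epsilon>" "\<And>z. z \<in> M \<Longrightarrow> ds \<le> snd (f z)"
  proof -
    show "ds \<le> delta0" unfolding ds_def by (rule Min_le) auto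
    show "ds \<le> \<epsilon>" unfolding ds_def by (rule Min_le) auto
    show "\<And>z. z \<in> M \<Longrightarrow> ds \<le> snd (f z)" unfolding ds_def by (rule Min_le) auto
  qed
  define Kt where "Kt = \<bar>K1\<bar> + (\<Sum>z\<in>M. \<bar>fst (f z)\<bar> + (real (card (UNIV :: 'a set)))^2)"
  have bound: "prob_hit_before H q \<beta> A x (exp (\<beta> * (Psi - \<epsilon>))) \<le> Kt * exp (- \<beta> * ds)" if b0: "\<beta> \<ge> 0" for \<beta>
  proof -
    interpret revchain "metro H q \<beta>" "\<lambda>y. exp (- \<beta> * H y)" using metro_revchain[OF b0] .
    define T where "T = exp (\<beta> * (Psi - \<epsilon>))"
    define n where "n = nat (\<lceil>T\<rceil> - 1)"
    have nT: "real n \<le> T"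
    proof -
      have "\<lceil>T\<rceil> < T + 1" by linarith
      then show ?thesis unfolding n_def T_def by (cases "\<lceil>exp (\<beta> * (Psi - \<epsilon>))\<rceil> - 1 \<ge> 0") auto
    qed
    have eb: "exp (- \<beta> * e1) \<le> exp (- \<beta> * ds)" if "ds \<le> e1" for e1
      using that b0 by (simp add: mult_left_mono)
    have cz: "hit (metro H q \<beta>) (- Cyc A z) {} n z \<le> (\<bar>fst (f z)\<bar> + (real (card (UNIV :: 'a set)))^2) * exp (- \<beta> * ds)"
      if zM: "z \<in> M" for z
    proof -
      have zR: "z \<in> R" using zM MR by auto
      have "hit (metro H q \<beta>) (- Cyc A z) {} n z
              \<le> fst (f z) * exp (- \<beta> * snd (f z)) + real n * (real (card (UNIV :: 'a set)))^2 * exp (- \<beta> * Gamma H q z A)"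
        using f[OF zR] b0 by blast
      also have "fst (f z) * exp (- \<beta> * snd (f z)) \<le> \<bar>fst (f z)\<bar> * exp (- \<beta> * ds)"
        using eb[OF ds_le(3)[OF zM]] by (intro mult_mono) auto
      also have "real n * (real (card (UNIV :: 'a set)))^2 * exp (- \<beta> * Gamma H q z A) \<le> (real (card (UNIV :: 'a set)))^2 * exp (- \<beta> * ds)"
      proof -
        have "real n * exp (- \<beta> * Gamma H q z A) \<le> T * exp (- \<beta> * Psi)"
        proof (intro mult_mono nT)
          show "exp (- \<beta> * Gamma H q z A) \<le> exp (- \<beta> * Psi)" using zM b0 unfolding M_def by (simp add: mult_left_mono)
        qed (auto simp: T_def)
        also have "T * exp (- \<beta> * Psi) = exp (- \<beta> * \<epsilon>)" unfolding T_def by (simp add: exp_add[symmetric] algebra_simps)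
        also have "\<dots> \<le> exp (- \<beta> * ds)" by (rule eb[OF ds_le(2)])
        finally show ?thesis by (simp add: mult.commute mult.left_commute)
      qed
      finally show ?thesis by (simp add: algebra_simps)
    qed
    have hAE: "hit (metro H q \<beta>) Alow Eset n x \<le> (\<Sum>z\<in>M. hit (metro H q \<beta>) (- Cyc A z) {} n z)"
    proof (cases "x \<in> M")
      case True
      have "hit (metro H q \<beta>) Alow Eset n x \<le> hit (metro H q \<beta>) (- Cyc A x) {} n x"
        by (rule hit_mono_sets) (use Cyc_disj[OF x_notin] in \<open>auto simp: Alow_def\<close>)
      also have "\<dots> \<le> (\<Sum>z\<in>M. hit (metro H q \<beta>) (- Cyc A z) {} n z)"
        by (rule member_le_sum) (use True hit_nonneg in auto)
      finally show ?thesis .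
    next
      case False
      have "hit (metro H q \<beta>) Alow Eset n x \<le> hit (metro H q \<beta>) Alow (Eset \<union> M) n x +
          (\<Sum>g\<in>M. hit (metro H q \<beta>) {g} (Alow \<union> Eset \<union> (M - {g})) n x * hit (metro H q \<beta>) Alow Eset n g)"
        by (rule hit_fhd)
      also have "hit (metro H q \<beta>) Alow (Eset \<union> M) n x = 0"
      proof (rule no_reach_hit[of "R - M"])
        show "R - M \<subseteq> R" by auto
        show "M \<inter> (R - M) = {}" by auto
        show "R - M \<subseteq> R - M" by simp
        show "x \<in> R - M" using R_x False by simp
        show "\<not> Reach (R - M) x"
          by (rule not_reach_x[of _ M]) (use R_x False Pe eps in \<open>auto simp: M_def Psi_def\<close>)
      qed
      also have "(\<Sum>g\<in>M. hit (metro H q \<beta>) {g} (Alow \<union> Eset \<union> (M - {g})) n x * hit (metro H q \<beta>) Alow Eset n g)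
          \<le> (\<Sum>g\<in>M. 1 * hit (metro H q \<beta>) (- Cyc A g) {} n g)"
      proof (intro sum_mono mult_mono hit_le_1 hit_nonneg)
        fix g assume "g \<in> M"
        then have "g \<notin> A" using MR R_A by auto
        then show "hit (metro H q \<beta>) Alow Eset n g \<le> hit (metro H q \<beta>) (- Cyc A g) {} n g"
          by (intro hit_mono_sets) (use Cyc_disj in \<open>auto simp: Alow_def\<close>)
      qed simp
      finally show ?thesis by simp
    qed
    have "prob_hit_before H q \<beta> A x T = hit (metro H q \<beta>) A {} n x"
      unfolding prob_hit_before_def n_def hit_le_eq ..
    also have "\<dots> \<le> hit (metro H q \<beta>) (Alow \<union> Eset) {} n x"
      by (rule hit_mono_sets) (use R_A in \<open>auto simp: Eset_def\<close>)
    also have "\<dots> = hit (metro H q \<beta>) Alow Eset n x + hit (metro H q \<beta>) Eset Alow n x"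
    proof -
      have "Alow \<inter> Eset = {}" unfolding Eset_def by auto
      from hit_split[OF this, of "{}" n x] show ?thesis by simp
    qed
    also have "\<dots> \<le> (\<Sum>z\<in>M. (\<bar>fst (f z)\<bar> + (real (card (UNIV :: 'a set)))^2) * exp (- \<beta> * ds)) + \<bar>K1\<bar> * exp (- \<beta> * ds)"
    proof (rule add_mono)
      show "hit (metro H q \<beta>) Alow Eset n x \<le> (\<Sum>z\<in>M. (\<bar>fst (f z)\<bar> + (real (card (UNIV :: 'a set)))^2) * exp (- \<beta> * ds))"
        using hAE cz by (meson order_trans sum_mono)
      have "hit (metro H q \<beta>) Eset Alow n x \<le> K1 * exp (- \<beta> * delta0)"
        using hit_le_hitinf K1 b0 order_trans by blast
      also have "\<dots> \<le> \<bar>K1\<bar> * exp (- \<beta> * ds)"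
        using eb[OF ds_le(1)] by (intro mult_mono) auto
      finally show "hit (metro H q \<beta>) Eset Alow n x \<le> \<bar>K1\<bar> * exp (- \<beta> * ds)" .
    qed
    also have "\<dots> = Kt * exp (- \<beta> * ds)" unfolding Kt_def sum_distrib_right[symmetric] by (simp only: ring_distribs add.commute)
    finally show ?thesis unfolding T_def .
  qed
  have "\<forall>\<^sub>F \<beta> in at_top. (0::real) \<le> \<beta> \<and> Kt * exp (- \<beta> * ds) < exp (- (ds / 2) * \<beta>)"
    using eventually_ge_at_top exp_eventually[OF ds_pos] by (rule eventually_conj)
  then have "\<forall>\<^sub>F \<beta> in at_top. prob_hit_before H q \<beta> A x (exp (\<beta> * (Psi_min H q x A - \<epsilon>))) < exp (- (ds / 2) * \<beta>)"
    by (rule eventually_mono) (use bound in \<open>fastforce simp: Psi_def\<close>)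
  then show ?thesis using ds_pos by (intro exI[of _ "ds / 2"]) auto
qed

end



context setting
begin

lemma Psi_max_nonneg: "0 \<le> Psi_max H q x A"
  using Gamma_nonneg[OF A_ne, of x] Gamma_R[OF R_x] by linarith

lemma upper_main:
  assumes eps: "\<epsilon> > 0"
  shows "\<exists>\<kappa>>0. \<forall>\<^sub>F \<beta> in at_top. prob_hit_after H q \<beta> A x (exp (\<beta> * (Psi_max H q x A + \<epsilon>))) < exp (- \<kappa> * \<beta>)"
proof -
  define Psi where "Psi = Psi_max H q x A"
  have Pp: "Psi + \<epsilon> > 0" using Psi_max_nonneg eps unfolding Psi_def by simp
  obtain K1 where K1: "\<forall>\<beta>\<ge>0. hitinf (metro H q \<beta>) Eset Alow x \<le> K1 * exp (- \<beta> * delta0)"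
    using T2_bound by blast
  obtain K3 where K3: "\<forall>\<beta>\<ge>0. \<forall>n. real n * (1 - hit (metro H q \<beta>) (- R) {} n x) \<le> K3 * exp (\<beta> * Psi)"
    using green_part unfolding Psi_def by blast
  define ds where "ds = min \<epsilon> delta0"
  have ds_pos: "ds > 0" unfolding ds_def using eps delta0_pos by simp
  define Kt where "Kt = 2 * \<bar>K3\<bar> + \<bar>K1\<bar>"
  have bound: "prob_hit_after H q \<beta> A x (exp (\<beta> * (Psi + \<epsilon>))) \<le> Kt * exp (- \<beta> * ds)"
    if b0: "\<beta> \<ge> 0" and b2: "exp (\<beta> * (Psi + \<epsilon>)) \<ge> 2" for \<beta>
  proof -
    interpret revchain "metro H q \<beta>" "\<lambda>y. exp (- \<beta> * H y)" using metro_revchain[OF b0] .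
    define T where "T = exp (\<beta> * (Psi + \<epsilon>))"
    define n where "n = nat \<lfloor>T\<rfloor>"
    have nT: "real n \<ge> T / 2"
    proof -
      have "real n \<ge> T - 1" unfolding n_def T_def by linarith
      then show ?thesis using b2 unfolding T_def by linarith
    qed
    have Tpos: "T > 0" unfolding T_def by simp
    have eb: "exp (- \<beta> * e1) \<le> exp (- \<beta> * ds)" if "ds \<le> e1" for e1
      using that b0 by (simp add: mult_left_mono)
    define U where "U = - R - A"
    have split: "hit (metro H q \<beta>) (- R) {} n x = hit (metro H q \<beta>) A U n x + hit (metro H q \<beta>) U A n x"
    proof -
      have "A \<inter> U = {}" unfolding U_def by auto
      from hit_split[OF this, of "{}" n x] have "hit (metro H q \<beta>) A U n x + hit (metro H q \<beta>) U A n x = hit (metro H q \<beta>) (A \<union> U) {} n x"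
        by simp
      moreover have "A \<union> U = - R" unfolding U_def using R_A by auto
      ultimately show ?thesis by simp
    qed
    have h1: "hit (metro H q \<beta>) A U n x \<le> hit (metro H q \<beta>) A {} n x" by (rule hit_mono_sets) auto
    have h2: "hit (metro H q \<beta>) U A n x \<le> \<bar>K1\<bar> * exp (- \<beta> * ds)"
    proof -
      have "hit (metro H q \<beta>) U A n x \<le> hitinf (metro H q \<beta>) U A x" by (rule hit_le_hitinf)
      also have "\<dots> \<le> hitinf (metro H q \<beta>) Eset Alow x"
        by (rule hitinf_mono_sets) (auto simp: U_def Eset_def Alow_def)
      also have "\<dots> \<le> K1 * exp (- \<beta> * delta0)" using K1 b0 by blast
      also have "\<dots> \<le> \<bar>K1\<bar> * exp (- \<beta> * ds)" using eb[of delta0] unfolding ds_def by (intro mult_mono) auto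
      finally show ?thesis .
    qed
    have h3: "1 - hit (metro H q \<beta>) (- R) {} n x \<le> 2 * \<bar>K3\<bar> * exp (- \<beta> * ds)"
    proof -
      have g: "real n * (1 - hit (metro H q \<beta>) (- R) {} n x) \<le> K3 * exp (\<beta> * Psi)" using K3 b0 by blast
      have s0: "0 \<le> 1 - hit (metro H q \<beta>) (- R) {} n x" using hit_le_1[of "- R" "{}" n x] by simp
      have "T / 2 * (1 - hit (metro H q \<beta>) (- R) {} n x) \<le> real n * (1 - hit (metro H q \<beta>) (- R) {} n x)"
        by (intro mult_right_mono nT s0)
      also have "\<dots> \<le> \<bar>K3\<bar> * exp (\<beta> * Psi)" using g by (meson abs_ge_self order_trans mult_right_mono exp_ge_zero)
      finally have "(1 - hit (metro H q \<beta>) (- R) {} n x) \<le> 2 * \<bar>K3\<bar> * (exp (\<beta> * Psi) / T)"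
        using Tpos by (simp add: field_simps)
      also have "exp (\<beta> * Psi) / T = exp (- \<beta> * \<epsilon>)"
        unfolding T_def by (simp add: exp_diff[symmetric] algebra_simps)
      also have "2 * \<bar>K3\<bar> * exp (- \<beta> * \<epsilon>) \<le> 2 * \<bar>K3\<bar> * exp (- \<beta> * ds)"
        using eb[of \<epsilon>] unfolding ds_def by (intro mult_left_mono) auto
      finally show ?thesis .
    qed
    have "prob_hit_after H q \<beta> A x T = 1 - hit (metro H q \<beta>) A {} n x"
      unfolding prob_hit_after_def n_def hit_le_eq ..
    also have "\<dots> \<le> (1 - hit (metro H q \<beta>) (- R) {} n x) + hit (metro H q \<beta>) U A n x"
      using split h1 by linarith
    also have "\<dots> \<le> 2 * \<bar>K3\<bar> * exp (- \<beta> * ds) + \<bar>K1\<bar> * exp (- \<beta> * ds)"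
      using h2 h3 by linarith
    also have "\<dots> = Kt * exp (- \<beta> * ds)" unfolding Kt_def by (simp add: algebra_simps)
    finally show ?thesis unfolding T_def .
  qed
  have ev2: "\<forall>\<^sub>F \<beta> in at_top. exp (\<beta> * (Psi + \<epsilon>)) \<ge> 2"
  proof -
    have "\<forall>\<^sub>F \<beta> in at_top. ln 2 / (Psi + \<epsilon>) \<le> (\<beta>::real)" by (rule eventually_ge_at_top)
    then show ?thesis
    proof (rule eventually_mono)
      fix \<beta> :: real assume "ln 2 / (Psi + \<epsilon>) \<le> \<beta>"
      then have "ln 2 \<le> \<beta> * (Psi + \<epsilon>)" using Pp by (simp add: field_simps)
      then have "exp (ln 2) \<le> exp (\<beta> * (Psi + \<epsilon>))" by (subst exp_le_cancel_iff)
      then show "exp (\<beta> * (Psi + \<epsilon>)) \<ge> 2" by simp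
    qed
  qed
  have "\<forall>\<^sub>F \<beta> in at_top. ((0::real) \<le> \<beta> \<and> exp (\<beta> * (Psi + \<epsilon>)) \<ge> 2) \<and> Kt * exp (- \<beta> * ds) < exp (- (ds / 2) * \<beta>)"
    by (intro eventually_conj eventually_ge_at_top ev2 exp_eventually[OF ds_pos])
  then have "\<forall>\<^sub>F \<beta> in at_top. prob_hit_after H q \<beta> A x (exp (\<beta> * (Psi_max H q x A + \<epsilon>))) < exp (- (ds / 2) * \<beta>)"
    by (rule eventually_mono) (use bound in \<open>fastforce simp: Psi_def\<close>)
  then show ?thesis using ds_pos by (intro exI[of _ "ds / 2"]) auto
qed

end

theorem proposition3p10:
  fixes H :: "'a::finite \<Rightarrow> real" and q :: "'a \<Rightarrow> 'a \<Rightarrow> real"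
    and A :: "'a set" and x :: 'a
  assumes q_range: "\<forall>u v. 0 \<le> q u v \<and> q u v \<le> 1"
    and q_stoch: "\<forall>u. (\<Sum>v\<in>UNIV. q u v) = 1"
    and q_sym: "\<forall>u v. q u v = q v u"
    and q_irred: "\<forall>u v. \<exists>\<omega>. path_from_to q \<omega> u v"
    and H_nonconst: "\<exists>u v. H u \<noteq> H v"
    and A_ne: "A \<noteq> {}"
    and x_notin: "x \<notin> A"
    and A_conv: "\<forall>y. (\<forall>\<omega>. path_from_to q \<omega> x y \<longrightarrow> (\<exists>z\<in>set \<omega>. z \<in> A)) \<longrightarrow> y \<in> A"
  shows "\<forall>\<epsilon>>0. \<exists>\<kappa>>0. \<forall>\<^sub>F \<beta> in at_top.
           prob_hit_before H q \<beta> A x (exp (\<beta> * (Psi_min H q x A - \<epsilon>))) < exp (- \<kappa> * \<beta>)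
         \<and> prob_hit_after H q \<beta> A x (exp (\<beta> * (Psi_max H q x A + \<epsilon>))) < exp (- \<kappa> * \<beta>)"
proof (intro allI impI)
  fix \<epsilon> :: real assume eps: "\<epsilon> > 0"
  interpret setting H q A x
    by unfold_locales (use q_range q_stoch q_sym q_irred A_ne x_notin in auto)
  obtain k1 where k1: "k1 > 0" "\<forall>\<^sub>F \<beta> in at_top. prob_hit_before H q \<beta> A x (exp (\<beta> * (Psi_min H q x A - \<epsilon>))) < exp (- k1 * \<beta>)"
    using lower_main[OF eps] by blast
  obtain k2 where k2: "k2 > 0" "\<forall>\<^sub>F \<beta> in at_top. prob_hit_after H q \<beta> A x (exp (\<beta> * (Psi_max H q x A + \<epsilon>))) < exp (- k2 * \<beta>)"
    using upper_main[OF eps] by blast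
  define k where "k = min k1 k2"
  have "\<forall>\<^sub>F \<beta> in at_top. (0 \<le> \<beta> \<and> prob_hit_before H q \<beta> A x (exp (\<beta> * (Psi_min H q x A - \<epsilon>))) < exp (- k1 * \<beta>))
      \<and> prob_hit_after H q \<beta> A x (exp (\<beta> * (Psi_max H q x A + \<epsilon>))) < exp (- k2 * \<beta>)"
    by (intro eventually_conj eventually_ge_at_top k1 k2)
  then have "\<forall>\<^sub>F \<beta> in at_top. prob_hit_before H q \<beta> A x (exp (\<beta> * (Psi_min H q x A - \<epsilon>))) < exp (- k * \<beta>)
         \<and> prob_hit_after H q \<beta> A x (exp (\<beta> * (Psi_max H q x A + \<epsilon>))) < exp (- k * \<beta>)"
  proof (rule eventually_mono)
    fix \<beta> :: real
    assume h: "(0 \<le> \<beta> \<and> prob_hit_before H q \<beta> A x (exp (\<beta> * (Psi_min H q x A - \<epsilon>))) < exp (- k1 * \<beta>))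
      \<and> prob_hit_after H q \<beta> A x (exp (\<beta> * (Psi_max H q x A + \<epsilon>))) < exp (- k2 * \<beta>)"
    have "exp (- k1 * \<beta>) \<le> exp (- k * \<beta>)" "exp (- k2 * \<beta>) \<le> exp (- k * \<beta>)"
      using h unfolding k_def by (auto intro: mult_right_mono)
    then show "prob_hit_before H q \<beta> A x (exp (\<beta> * (Psi_min H q x A - \<epsilon>))) < exp (- k * \<beta>)
         \<and> prob_hit_after H q \<beta> A x (exp (\<beta> * (Psi_max H q x A + \<epsilon>))) < exp (- k * \<beta>)"
      using h by linarith
  qed
  then show "\<exists>\<kappa>>0. \<forall>\<^sub>F \<beta> in at_top.
           prob_hit_before H q \<beta> A x (exp (\<beta> * (Psi_min H q x A - \<epsilon>))) < exp (- \<kappa> * \<beta>)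
         \<and> prob_hit_after H q \<beta> A x (exp (\<beta> * (Psi_max H q x A + \<epsilon>))) < exp (- \<kappa> * \<beta>)"
    using k1 k2 unfolding k_def by (intro exI[of _ "min k1 k2"]) auto
qed


end
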